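(* There is an integer $k_0$ such that for any integer $k\ge k_0$ and any density $\alpha\le\alpha_0$ the following holds w.h.p. over the choice of the random $k$-CNF formula $\Phi=\Phi(k,n,\lfloor\alpha n\rfloor)$. There exists an $r_0$-marking $(\mathcal V_{\mathrm m},\mathcal V_{\mathrm a},\mathcal V_{\mathrm c})$ of $\Phi$. Moreover, for any such marking, for any $v\in\mathcal V_{\mathrm m}\cup\mathcal V_{\mathrm a}$, any $V\subseteq\mathcal V_{\mathrm m}\cup\mathcal V_{\mathrm a}$ with $v\notin V$, and any $\Lambda:V\to\{\mathsf F,\mathsf T\}$, $$\max\left\{\Pr_{\mu_{\Omega^\Lambda}}(v\mapsto\mathsf F),\ \Pr_{\mu_{\Omega^\Lambda}}(v\mapsto\mathsf T)\right\}\le\frac12\exp\!\left(\frac{1}{k\,2^{(r_0+\delta)k}}\right).$$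
   Context: The random $k$-CNF formula $\Phi(k,n,m)=(\mathcal V,\mathcal C)$ is uniform over $k$-CNF formulas with $n$ variables and $m$ clauses of $k$ literals each (repetitions allowed); w.h.p. means with probability $1-o(1)$ as $n\to\infty$. For a clause $c$, $\mathrm{var}(c)$ is its set of variables. The degree of a variable is the number of occurrences of its literals in $\Phi$. Constants: $r_0=0.117841$, $\delta=0.00001$, $\Delta=\lceil 2^{(r_0-2\delta)k}\rceil$, $\alpha_0=2^{(r_0-2\delta)k}/k^3$. A variable is high-degree if its degree is at least $\Delta$. Bad variables/clauses: let $\mathcal V_0$ be the high-degree variables and $\mathcal C_0$ the clauses with at least $3$ variables in $\mathcal V_0$; for $i\ge1$ put $\mathcal V_i=\mathcal V_{i-1}\cup\mathrm{var}(\mathcal C_{i-1})$, $\mathcal C_i=\{c:|\mathrm{var}(c)\cap\mathcal V_i|\ge3\}$, stopping at the first $i\ge1$ with $\mathcal V_i=\mathcal V_{i-1}$; $\mathcal V_{\mathrm{bad}}=\mathcal V_i$, $\mathcal C_{\mathrm{bad}}=\mathcal C_i$, $\mathcal V_{\mathrm{good}}=\mathcal V\setminus\mathcal V_{\mathrm{bad}}$, $\mathcal C_{\mathrm{good}}=\mathcal C\setminus\mathcal C_{\mathrm{bad}}$. A set $V\subseteq\mathcal V_{\mathrm{good}}$ is $r$-distributed if $|\mathrm{var}(c)\cap V|\ge r(k-3)$ for every $c\in\mathcal C_{\mathrm{good}}$. An $r$-marking of $\Phi$ is a partition $(\mathcal V_{\mathrm m},\mathcal V_{\mathrm a},\mathcal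 V_{\mathrm c})$ of $\mathcal V$ such that $\mathcal V_{\mathrm{bad}}\subseteq\mathcal V_{\mathrm c}$, $\mathcal V_{\mathrm c}\setminus\mathcal V_{\mathrm{bad}}$ is $(2r)$-distributed, and $\mathcal V_{\mathrm m}$ and $\mathcal V_{\mathrm a}$ are $r$-distributed subsets of good variables. For a partial assignment $\Lambda$, $\Phi^\Lambda$ is the formula obtained by removing the clauses satisfied by $\Lambda$ and removing false literals from the remaining clauses; $\Omega^\Lambda$ is the set of satisfying assignments of $\Phi^\Lambda$ and $\mu_{\Omega^\Lambda}$ the uniform distribution on it. *)

theory Defs
  imports Complex_Main "HOL-Library.FuncSet"
begin

text \<open>Variables are natural numbers; the variable set of a formula on n variables is {0..<n}.
  A literal is a pair (x, s): variable x, sign s (True = positive literal x, False = negated).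
  A clause is a list of literals, a formula a list of clauses (repetitions allowed).\<close>

type_synonym lit = "nat \<times> bool"
type_synonym clause = "lit list"
type_synonym cnf = "clause list"

definition r0 :: real where "r0 = 0.117841"
definition delta :: real where "delta = 0.00001"
definition Delta :: "nat \<Rightarrow> int" where
  "Delta k = \<lceil>2 powr ((r0 - 2 * delta) * real k)\<rceil>"
definition alpha0 :: "nat \<Rightarrow> real" where
  "alpha0 k = 2 powr ((r0 - 2 * delta) * real k) / real k ^ 3"

definition kcnf_formulas :: "nat \<Rightarrow> nat \<Rightarrow> nat \<Rightarrow> cnf set" where
  "kcnf_formulas k n m = {F. length F = m \<and> (\<forall>c\<in>set F. length c = k \<and> (\<forall>l\<in>set c. fst l < n))}"

definition prob_kcnf :: "nat \<Rightarrow> nat \<Rightarrow> nat \<Rightarrow> (cnf \<Rightarrow> bool) \<Rightarrow> real" where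
  "prob_kcnf k n m P = real (card {F \<in> kcnf_formulas k n m. P F}) / real (card (kcnf_formulas k n m))"

definition var_cl :: "clause \<Rightarrow> nat set" where
  "var_cl c = fst ` set c"

definition degree :: "cnf \<Rightarrow> nat \<Rightarrow> nat" where
  "degree F x = (\<Sum>c\<leftarrow>F. length (filter (\<lambda>l. fst l = x) c))"

definition high_deg :: "nat \<Rightarrow> nat \<Rightarrow> cnf \<Rightarrow> nat set" where
  "high_deg k n F = {x \<in> {0..<n}. int (degree F x) \<ge> Delta k}"

text \<open>Clauses are identified by their positions in the list.\<close>
definition clauses_hit :: "cnf \<Rightarrow> nat set \<Rightarrow> nat set" where
  "clauses_hit F V = {j. j < length F \<and> card (var_cl (F ! j) \<inter> V) \<ge> 3}"

fun V_iter :: "nat \<Rightarrow> nat \<Rightarrow> cnf \<Rightarrow> nat \<Rightarrow> nat set" where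
  "V_iter k n F 0 = high_deg k n F"
| "V_iter k n F (Suc i) = V_iter k n F i \<union> (\<Union>j\<in>clauses_hit F (V_iter k n F i). var_cl (F ! j))"

text \<open>The iteration is increasing in a finite set, so its limit (union) is the value at which it stops.\<close>
definition V_bad :: "nat \<Rightarrow> nat \<Rightarrow> cnf \<Rightarrow> nat set" where
  "V_bad k n F = (\<Union>i. V_iter k n F i)"
definition C_bad :: "nat \<Rightarrow> nat \<Rightarrow> cnf \<Rightarrow> nat set" where
  "C_bad k n F = clauses_hit F (V_bad k n F)"
definition V_good :: "nat \<Rightarrow> nat \<Rightarrow> cnf \<Rightarrow> nat set" where
  "V_good k n F = {0..<n} - V_bad k n F"
definition C_good :: "nat \<Rightarrow> nat \<Rightarrow> cnf \<Rightarrow> nat set" where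
  "C_good k n F = {0..<length F} - C_bad k n F"

definition r_distributed :: "nat \<Rightarrow> nat \<Rightarrow> cnf \<Rightarrow> real \<Rightarrow> nat set \<Rightarrow> bool" where
  "r_distributed k n F r V \<longleftrightarrow> V \<subseteq> V_good k n F \<and>
     (\<forall>j\<in>C_good k n F. real (card (var_cl (F ! j) \<inter> V)) \<ge> r * (real k - 3))"

definition marking :: "nat \<Rightarrow> nat \<Rightarrow> cnf \<Rightarrow> real \<Rightarrow> nat set \<Rightarrow> nat set \<Rightarrow> nat set \<Rightarrow> bool" where
  "marking k n F r Vm Va Vc \<longleftrightarrow>
     Vm \<inter> Va = {} \<and> Vm \<inter> Vc = {} \<and> Va \<inter> Vc = {} \<and> Vm \<union> Va \<union> Vc = {0..<n} \<and>
     V_bad k n F \<subseteq> Vc \<and> r_distributed k n F (2 * r) (Vc - V_bad k n F) \<and>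
     r_distributed k n F r Vm \<and> r_distributed k n F r Va"

text \<open>Phi^Lambda for a partial assignment Lambda with domain V (values of Lam outside V irrelevant).\<close>
definition reduce :: "cnf \<Rightarrow> nat set \<Rightarrow> (nat \<Rightarrow> bool) \<Rightarrow> cnf" where
  "reduce F V Lam = map (filter (\<lambda>l. fst l \<notin> V))
      (filter (\<lambda>c. \<not> (\<exists>l\<in>set c. fst l \<in> V \<and> Lam (fst l) = snd l)) F)"

definition Omega :: "nat \<Rightarrow> cnf \<Rightarrow> nat set \<Rightarrow> (nat \<Rightarrow> bool) \<Rightarrow> (nat \<Rightarrow> bool) set" where
  "Omega n F V Lam = {\<tau> \<in> ({0..<n} - V) \<rightarrow>\<^sub>E (UNIV :: bool set).
      \<forall>c\<in>set (reduce F V Lam). \<exists>l\<in>set c. \<tau> (fst l) = snd l}"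

definition prob_val :: "nat \<Rightarrow> cnf \<Rightarrow> nat set \<Rightarrow> (nat \<Rightarrow> bool) \<Rightarrow> nat \<Rightarrow> bool \<Rightarrow> real" where
  "prob_val n F V Lam v b =
     real (card {\<tau> \<in> Omega n F V Lam. \<tau> v = b}) / real (card (Omega n F V Lam))"

end

theory Submission
  imports Defs "HOL-Analysis.Harmonic_Numbers" "HOL-Real_Asymp.Real_Asymp"
begin


section \<open>Product spaces\<close>

definition depends :: "('v \<Rightarrow> 'b) set \<Rightarrow> ('v \<Rightarrow> 'b) set \<Rightarrow> 'v set \<Rightarrow> bool" where
  "depends Om E U \<longleftrightarrow> (\<forall>f\<in>Om. \<forall>g\<in>Om. (\<forall>x\<in>U. f x = g x) \<longrightarrow> (f \<in> E \<longleftrightarrow> g \<in> E))"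

definition mrg :: "'v set \<Rightarrow> ('v \<Rightarrow> 'b) \<Rightarrow> ('v \<Rightarrow> 'b) \<Rightarrow> ('v \<Rightarrow> 'b)" where
  "mrg U f g = (\<lambda>x. if x \<in> U then f x else g x)"

lemma mrg_PiE: "f \<in> PiE X A \<Longrightarrow> g \<in> PiE X A \<Longrightarrow> mrg U f g \<in> PiE X A"
  unfolding mrg_def PiE_def Pi_def extensional_def by auto

lemma indep_card:
  assumes fin: "finite (PiE X A)"
    and E: "E \<subseteq> PiE X A" and G: "G \<subseteq> PiE X A"
    and dE: "depends (PiE X A) E U" and dG: "depends (PiE X A) G V" and disj: "U \<inter> V = {}"
  shows "card (E \<inter> G) * card (PiE X A) = card E * card G"
proof -
  let ?Om = "PiE X A"
  let ?h = "\<lambda>(f,g). (mrg U f g, mrg U g f)"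
  have bij: "bij_betw ?h (E \<times> G) ((E \<inter> G) \<times> ?Om)"
  proof (rule bij_betw_byWitness[where f' = ?h])
    show "\<forall>a\<in>E \<times> G. ?h (?h a) = a"
      by (auto simp: mrg_def fun_eq_iff)
    show "\<forall>a\<in>(E \<inter> G) \<times> ?Om. ?h (?h a) = a"
      by (auto simp: mrg_def fun_eq_iff)
    show "?h ` (E \<times> G) \<subseteq> (E \<inter> G) \<times> ?Om"
    proof clarsimp
      fix f g assume f: "f \<in> E" and g: "g \<in> G"
      have fO: "f \<in> ?Om" and gO: "g \<in> ?Om" using f g E G by auto
      have m1: "mrg U f g \<in> ?Om" "mrg U g f \<in> ?Om" by (simp_all add: mrg_PiE fO gO)
      have "\<forall>x\<in>U. f x = mrg U f g x" by (auto simp: mrg_def)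
      hence "mrg U f g \<in> E" using dE fO m1 f unfolding depends_def by blast
      moreover have "\<forall>x\<in>V. g x = mrg U f g x" using disj by (auto simp: mrg_def)
      hence "mrg U f g \<in> G" using dG gO m1 g unfolding depends_def by blast
      ultimately show "mrg U f g \<in> E \<and> mrg U f g \<in> G \<and> mrg U g f \<in> ?Om" using m1 by auto
    qed
    show "?h ` ((E \<inter> G) \<times> ?Om) \<subseteq> E \<times> G"
    proof clarsimp
      fix f g assume f: "f \<in> E" "f \<in> G" and gO: "g \<in> ?Om"
      have fO: "f \<in> ?Om" using f E by auto
      have m1: "mrg U f g \<in> ?Om" "mrg U g f \<in> ?Om" by (simp_all add: mrg_PiE fO gO)
      have "\<forall>x\<in>U. f x = mrg U f g x" by (auto simp: mrg_def)
      hence "mrg U f g \<in> E" using dE fO m1 f unfolding depends_def by blast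
      moreover have "\<forall>x\<in>V. f x = mrg U g f x" using disj by (auto simp: mrg_def)
      hence "mrg U g f \<in> G" using dG fO m1 f unfolding depends_def by blast
      ultimately show "mrg U f g \<in> E \<and> mrg U g f \<in> G" by auto
    qed
  qed
  have "card (E \<times> G) = card ((E \<inter> G) \<times> ?Om)" using bij_betw_same_card[OF bij] .
  thus ?thesis by (simp add: card_cartesian_product)
qed

lemma depends_mono: "depends Om E U \<Longrightarrow> U \<subseteq> U' \<Longrightarrow> depends Om E U'"
  unfolding depends_def by blast

section \<open>Lovasz Local Lemma (counting version)\<close>

definition avoid :: "'a set \<Rightarrow> ('i \<Rightarrow> 'a set) \<Rightarrow> 'i set \<Rightarrow> 'a set" where
  "avoid Om B S = Om - \<Union>(B ` S)"

lemma avoid_insert: "avoid Om B (insert j S) = avoid Om B S - B j"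
  unfolding avoid_def by auto

lemma avoid_anti: "S \<subseteq> T \<Longrightarrow> avoid Om B T \<subseteq> avoid Om B S"
  unfolding avoid_def by auto

lemma peel:
  fixes Om :: "'a set" and B :: "'i \<Rightarrow> 'a set" and x :: real
  assumes fin: "finite Om" and T: "finite T" and x: "x \<le> 1"
    and hyp: "\<And>j R. j \<in> T \<Longrightarrow> R \<subseteq> S2 \<union> T \<Longrightarrow> j \<notin> R \<Longrightarrow>
                 real (card (B j \<inter> avoid Om B R)) \<le> x * real (card (avoid Om B R))"
    and disj: "T \<inter> S2 = {}"
  shows "(1 - x) ^ card T * real (card (avoid Om B S2)) \<le> real (card (avoid Om B (S2 \<union> T)))"
  using T hyp disj
proof (induction T rule: finite_induct)
  case empty thus ?case by simp
next
  case (insert j T)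
  have IH: "(1 - x) ^ card T * real (card (avoid Om B S2)) \<le> real (card (avoid Om B (S2 \<union> T)))"
    using insert.prems by (intro insert.IH) auto
  let ?R = "S2 \<union> T"
  have h: "real (card (B j \<inter> avoid Om B ?R)) \<le> x * real (card (avoid Om B ?R))"
    using insert.prems insert.hyps by (intro insert.prems(1)) auto
  have finR: "finite (avoid Om B ?R)" using fin unfolding avoid_def by auto
  have "avoid Om B (S2 \<union> insert j T) = avoid Om B ?R - (B j \<inter> avoid Om B ?R)"
    by (auto simp: avoid_def)
  hence "card (avoid Om B (S2 \<union> insert j T)) = card (avoid Om B ?R) - card (B j \<inter> avoid Om B ?R)"
    using finR by (simp add: card_Diff_subset)
  hence c: "real (card (avoid Om B (S2 \<union> insert j T))) = real (card (avoid Om B ?R)) - real (card (B j \<inter> avoid Om B ?R))"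
    using finR by (simp add: card_mono of_nat_diff)
  have "(1 - x) ^ card (insert j T) * real (card (avoid Om B S2)) = (1 - x) * ((1 - x) ^ card T * real (card (avoid Om B S2)))"
    using insert.hyps by simp
  also have "\<dots> \<le> (1 - x) * real (card (avoid Om B ?R))"
    using IH x by (intro mult_left_mono) auto
  also have "\<dots> \<le> real (card (avoid Om B (S2 \<union> insert j T)))"
    using c h by (simp add: algebra_simps)
  finally show ?case .
qed

locale lll_setting =
  fixes Om :: "'a set" and B :: "'i \<Rightarrow> 'a set" and I :: "'i set" and N :: "'i \<Rightarrow> 'i set"
    and x :: real and d :: nat
  assumes finOm: "finite Om" and finI: "finite I"
    and indep: "\<And>i S. i \<in> I \<Longrightarrow> S \<subseteq> I - N i - {i} \<Longrightarrow>
         real (card (B i \<inter> avoid Om B S)) * real (card Om) = real (card (B i)) * real (card (avoid Om B S))"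
    and probB: "\<And>i. i \<in> I \<Longrightarrow> real (card (B i)) \<le> x * (1 - x) ^ d * real (card Om)"
    and deg: "\<And>i. i \<in> I \<Longrightarrow> card (N i \<inter> I) \<le> d"
    and x0: "0 \<le> x" and x1: "x < 1"
begin

lemma core: "S \<subseteq> I \<Longrightarrow> i \<in> I \<Longrightarrow> i \<notin> S \<Longrightarrow>
   real (card (B i \<inter> avoid Om B S)) \<le> x * real (card (avoid Om B S))"
proof (induction "card S" arbitrary: S i rule: less_induct)
  case less
  define S1 where "S1 = S \<inter> N i"
  define S2 where "S2 = S - N i"
  have finS: "finite S" using less.prems finI finite_subset by blast
  have S12: "S = S2 \<union> S1" "S1 \<inter> S2 = {}" unfolding S1_def S2_def by auto
  have fS1: "finite S1" using finS S1_def by auto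
  have peel1: "(1 - x) ^ card S1 * real (card (avoid Om B S2)) \<le> real (card (avoid Om B (S2 \<union> S1)))"
  proof (rule peel[OF finOm fS1])
    show "x \<le> 1" using x1 by simp
    show "S1 \<inter> S2 = {}" by fact
    fix j R assume j: "j \<in> S1" and R: "R \<subseteq> S2 \<union> S1" and jR: "j \<notin> R"
    have "R \<subset> S" using R j jR S12 by auto
    hence "card R < card S" using finS psubset_card_mono by blast
    thus "real (card (B j \<inter> avoid Om B R)) \<le> x * real (card (avoid Om B R))"
      using less.hyps[of R j] R j jR S12 less.prems by auto
  qed
  have S2ind: "S2 \<subseteq> I - N i - {i}" using less.prems unfolding S2_def by auto
  have "real (card (B i \<inter> avoid Om B S)) \<le> real (card (B i \<inter> avoid Om B S2))"
  proof -
    have "B i \<inter> avoid Om B S \<subseteq> B i \<inter> avoid Om B S2" unfolding S2_def avoid_def by auto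
    moreover have "finite (B i \<inter> avoid Om B S2)" using finOm unfolding avoid_def by auto
    ultimately show ?thesis by (simp add: card_mono)
  qed
  show ?case
  proof (cases "card Om = 0")
    case True
    hence "Om = {}" using finOm by auto
    thus ?thesis by (simp add: avoid_def)
  next
    case False
    hence Opos: "real (card Om) > 0" by simp
    have "real (card (B i \<inter> avoid Om B S)) * real (card Om) \<le> real (card (B i \<inter> avoid Om B S2)) * real (card Om)"
      using \<open>real (card (B i \<inter> avoid Om B S)) \<le> _\<close> by (simp add: mult_right_mono)
    also have "\<dots> = real (card (B i)) * real (card (avoid Om B S2))"
      using indep[OF less.prems(2) S2ind] .
    also have "\<dots> \<le> x * (1 - x) ^ d * real (card Om) * real (card (avoid Om B S2))"
      using probB[OF less.prems(2)] by (simp add: mult_right_mono)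
    also have "\<dots> \<le> x * (1 - x) ^ card S1 * real (card Om) * real (card (avoid Om B S2))"
    proof -
      have "card S1 \<le> card (N i \<inter> I)" using less.prems finI unfolding S1_def by (intro card_mono) auto
      hence "card S1 \<le> d" using deg[OF less.prems(2)] by simp
      hence "(1 - x) ^ d \<le> (1 - x) ^ card S1" using x0 x1 by (intro power_decreasing) auto
      thus ?thesis using x0 by (intro mult_right_mono mult_left_mono) auto
    qed
    also have "\<dots> = x * real (card Om) * ((1 - x) ^ card S1 * real (card (avoid Om B S2)))"
      by (simp add: algebra_simps)
    also have "\<dots> \<le> x * real (card Om) * real (card (avoid Om B S))"
      using peel1 S12 x0 by (intro mult_left_mono) (auto simp: Un_commute)
    finally show ?thesis using Opos by (simp add: algebra_simps)
  qed
qed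

lemma avoid_lower:
  assumes S: "S \<subseteq> I" shows "(1 - x) ^ card S * real (card Om) \<le> real (card (avoid Om B S))"
proof -
  have "(1 - x) ^ card S * real (card (avoid Om B {})) \<le> real (card (avoid Om B ({} \<union> S)))"
  proof (rule peel[OF finOm])
    show "finite S" using S finI finite_subset by blast
    show "x \<le> 1" using x1 by simp
    show "S \<inter> {} = {}" by simp
    fix j R assume "j \<in> S" "R \<subseteq> {} \<union> S" "j \<notin> R"
    thus "real (card (B j \<inter> avoid Om B R)) \<le> x * real (card (avoid Om B R))"
      using core[of R j] S by auto
  qed
  thus ?thesis by (simp add: avoid_def)
qed

lemma avoid_pos: "Om \<noteq> {} \<Longrightarrow> avoid Om B I \<noteq> {}"
proof
  assume "Om \<noteq> {}" "avoid Om B I = {}"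
  have "(1 - x) ^ card I * real (card Om) \<le> 0" using avoid_lower[of I] \<open>avoid Om B I = {}\<close> by simp
  moreover have "(1 - x) ^ card I * real (card Om) > 0" using x1 finOm \<open>Om \<noteq> {}\<close>
    by (simp add: card_gt_0_iff)
  ultimately show False by simp
qed

lemma conditional:
  assumes A: "A \<subseteq> Om"
    and indA: "\<And>S. S \<subseteq> I - NA \<Longrightarrow>
        real (card (A \<inter> avoid Om B S)) * real (card Om) = real (card A) * real (card (avoid Om B S))"
  shows "real (card (A \<inter> avoid Om B I)) * (1 - x) ^ card (NA \<inter> I) * real (card Om)
          \<le> real (card A) * real (card (avoid Om B I))"
proof -
  define S2 where "S2 = I - NA"
  define T where "T = NA \<inter> I"
  have I: "I = S2 \<union> T" "T \<inter> S2 = {}" unfolding S2_def T_def by auto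
  have pl: "(1 - x) ^ card T * real (card (avoid Om B S2)) \<le> real (card (avoid Om B (S2 \<union> T)))"
  proof (rule peel[OF finOm])
    show "finite T" using finI T_def by auto
    show "x \<le> 1" using x1 by simp
    show "T \<inter> S2 = {}" by fact
    fix j R assume "j \<in> T" "R \<subseteq> S2 \<union> T" "j \<notin> R"
    thus "real (card (B j \<inter> avoid Om B R)) \<le> x * real (card (avoid Om B R))"
      using core I by auto
  qed
  have "real (card (A \<inter> avoid Om B I)) \<le> real (card (A \<inter> avoid Om B S2))"
  proof -
    have "A \<inter> avoid Om B I \<subseteq> A \<inter> avoid Om B S2" unfolding S2_def avoid_def by auto
    moreover have "finite (A \<inter> avoid Om B S2)" using finOm unfolding avoid_def by auto
    ultimately show ?thesis by (simp add: card_mono)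
  qed
  hence "real (card (A \<inter> avoid Om B I)) * (1 - x) ^ card T * real (card Om)
        \<le> real (card (A \<inter> avoid Om B S2)) * real (card Om) * (1 - x) ^ card T"
  proof -
    have "0 \<le> (1 - x) ^ card T * real (card Om)" using x1 by simp
    hence "real (card (A \<inter> avoid Om B I)) * ((1 - x) ^ card T * real (card Om))
       \<le> real (card (A \<inter> avoid Om B S2)) * ((1 - x) ^ card T * real (card Om))"
      using \<open>real (card (A \<inter> avoid Om B I)) \<le> _\<close> by (rule mult_right_mono[rotated])
    thus ?thesis by (simp add: mult_ac)
  qed
  also have "\<dots> = real (card A) * ((1 - x) ^ card T * real (card (avoid Om B S2)))"
    using indA[of S2] S2_def by (simp add: algebra_simps)
  also have "\<dots> \<le> real (card A) * real (card (avoid Om B I))"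
    using pl I by (intro mult_left_mono) auto
  finally show ?thesis unfolding T_def .
qed

end


definition hsum :: "(nat \<Rightarrow> real) \<Rightarrow> real \<Rightarrow> nat \<Rightarrow> real" where
  "hsum f z n = (\<Sum>k<n. f k * z^k)"

lemma hsum_expand:
  "hsum f z (numeral n) = f 0 + hsum (\<lambda>k. f (k+1)) z (pred_numeral n) * z"
  "hsum f z (Suc 0) = f 0"
  "hsum f z 0 = 0"
proof -
  have *: "(\<Sum>k<Suc m. f k * z ^ k) = f 0 + (\<Sum>k<m. f (k + 1) * z ^ k) * z" for m
    by (subst sum.lessThan_Suc_shift) (simp add: sum_distrib_right sum_distrib_left mult_ac)
  show "hsum f z (numeral n) = f 0 + hsum (\<lambda>k. f (k+1)) z (pred_numeral n) * z"
    using *[of "pred_numeral n"] by (simp add: numeral_eq_Suc hsum_def)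
qed (simp_all add: hsum_def)

lemma ln_bounds_series:
  fixes x :: real and n :: nat
  assumes x: "x > 1" and y: "y = (x-1)/(x+1)" and z: "z = y^2"
  shows "2*y * hsum (\<lambda>k. inverse (real (2*k+1))) z n \<le> ln x"
    "ln x \<le> 2*y * hsum (\<lambda>k. inverse (real (2*k+1))) z n + 2 * (y * z^n / (1 - z) / real (2*n+1))"
proof -
  have h: "(\<Sum>k<n. 2*y^(2*k+1) / of_nat (2*k+1)) \<le> ln x \<and>
      ln x \<le> (\<Sum>k<n. 2*y^(2*k+1) / of_nat (2*k+1)) + 2*(y^(2*n+1) / (1 - y^2) / of_nat (2*n+1))"
    using ln_approx_bounds[OF x, of n] unfolding y atLeastAtMost_iff by blast
  have e: "2*y * hsum (\<lambda>k. inverse (real (2*k+1))) z n = (\<Sum>k<n. 2*y^(2*k+1) / of_nat (2*k+1))"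
    unfolding hsum_def z
    by (subst sum_distrib_left) (simp add: field_simps power_mult[symmetric] mult_ac)
  have e3: "y^(2*n) = z^n" unfolding z by (simp add: power_mult)
  show "2*y * hsum (\<lambda>k. inverse (real (2*k+1))) z n \<le> ln x"
    using h e by simp
  show "ln x \<le> 2*y * hsum (\<lambda>k. inverse (real (2*k+1))) z n + 2 * (y * z^n / (1 - z) / real (2*n+1))"
    using h e e3 by (simp add: z[symmetric])
qed

lemma ln3_ub: "ln (3::real) \<le> 1.0986123"
  apply (rule order.trans[OF ln_bounds_series(2)[of 3 "1/2" "1/4" 14]])
  apply (simp_all add: hsum_expand power2_eq_square power_divide)
  done

lemma ln2_ub: "ln (2::real) \<le> 0.69314719"
  apply (rule order.trans[OF ln_bounds_series(2)[of 2 "1/3" "1/9" 10]])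
  apply (simp_all add: hsum_expand power2_eq_square power_divide)
  done

lemma ln41_ub: "ln (100/41::real) \<le> 0.8915982"
  apply (rule order.trans[OF ln_bounds_series(2)[of "100/41" "59/141" "(59/141)^2" 10]])
  apply (simp_all add: hsum_expand power2_eq_square power_divide)
  done

lemma lnA_lb: "0.2111441 \<le> ln (3000000/2428972::real)"
  apply (rule order.trans[OF _ ln_bounds_series(1)[of "3000000/2428972" "571028/5428972" "(571028/5428972)^2" 6]])
  apply (simp_all add: hsum_expand power2_eq_square power_divide)
  done

lemma lnB_lb: "0.2918152 \<le> ln (100000000/74690652::real)"
  apply (rule order.trans[OF _ ln_bounds_series(1)[of "100000000/74690652" "25309348/174690652" "(25309348/174690652)^2" 6]])
  apply (simp_all add: hsum_expand power2_eq_square power_divide)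
  done

definition qq :: real where "qq = 285514 / 1000000"
definition rho_m :: real where "rho_m = 3 powr r0 * (1 - 2 * qq / 3)"
definition rho_c :: real where "rho_c = (100/41) powr (2 * r0) * (2 * qq + (1 - 2 * qq) * (41/100))"

lemma rho_m_bound: "rho_m * 2 powr (r0 - 2 * delta) < 1"
proof -
  have A: "1 - 2 * qq / 3 = inverse (3000000/2428972)" by (simp add: qq_def)
  have "ln (1 - 2 * qq / 3) = - ln (3000000/2428972)" unfolding A by (intro ln_inverse)
  hence "ln (1 - 2 * qq / 3) \<le> - 0.2111441" using lnA_lb by simp
  moreover have "r0 * ln 3 \<le> r0 * 1.0986123" using ln3_ub by (simp add: r0_def)
  moreover have "(r0 - 2 * delta) * ln 2 \<le> (r0 - 2 * delta) * 0.69314719"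
    using ln2_ub by (simp add: r0_def delta_def)
  ultimately have neg: "r0 * ln 3 + ln (1 - 2 * qq / 3) + (r0 - 2 * delta) * ln 2 < 0"
    by (simp add: r0_def delta_def)
  have pos: "1 - 2 * qq / 3 > 0" by (simp add: qq_def)
  have "rho_m * 2 powr (r0 - 2 * delta) = exp (r0 * ln 3 + ln (1 - 2 * qq / 3) + (r0 - 2 * delta) * ln 2)"
    unfolding rho_m_def powr_def using pos by (simp add: exp_add)
  also have "\<dots> < 1" using neg by simp
  finally show ?thesis .
qed

lemma rho_c_bound: "rho_c * 2 powr (r0 - 2 * delta) < 1"
proof -
  have A: "2 * qq + (1 - 2 * qq) * (41/100) = inverse (100000000/74690652)" by (simp add: qq_def)
  have "ln (2 * qq + (1 - 2 * qq) * (41/100)) = - ln (100000000/74690652)" unfolding A by (intro ln_inverse)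
  hence "ln (2 * qq + (1 - 2 * qq) * (41/100)) \<le> - 0.2918152" using lnB_lb by simp
  moreover have "2 * r0 * ln (100/41) \<le> 2 * r0 * 0.8915982" using ln41_ub by (simp add: r0_def)
  moreover have "(r0 - 2 * delta) * ln 2 \<le> (r0 - 2 * delta) * 0.69314719"
    using ln2_ub by (simp add: r0_def delta_def)
  ultimately have neg: "2 * r0 * ln (100/41) + ln (2 * qq + (1 - 2 * qq) * (41/100)) + (r0 - 2 * delta) * ln 2 < 0"
    by (simp add: r0_def delta_def)
  have pos: "2 * qq + (1 - 2 * qq) * (41/100) > 0" by (simp add: qq_def)
  have "rho_c * 2 powr (r0 - 2 * delta) = exp (2 * r0 * ln (100/41) + ln (2 * qq + (1 - 2 * qq) * (41/100)) + (r0 - 2 * delta) * ln 2)"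
    unfolding rho_c_def powr_def using pos by (simp add: exp_add)
  also have "\<dots> < 1" using neg by simp
  finally show ?thesis .
qed


section \<open>Structure of bad variables\<close>

lemma finite_var_cl[simp]: "finite (var_cl c)"
  unfolding var_cl_def by simp

lemma card_var_cl_le: "card (var_cl c) \<le> length c"
  unfolding var_cl_def by (metis card_image_le card_length finite_set le_trans)

lemma V_iter_mono: "i \<le> j \<Longrightarrow> V_iter k n F i \<subseteq> V_iter k n F j"
proof (induction j)
  case 0 thus ?case by simp
next
  case (Suc j)
  thus ?case by (cases "i = Suc j") auto
qed

lemma V_iter_sub_bad: "V_iter k n F i \<subseteq> V_bad k n F"
  unfolding V_bad_def by auto

lemma finite_sub_V_bad:
  "finite S \<Longrightarrow> S \<subseteq> V_bad k n F \<Longrightarrow> \<exists>i. S \<subseteq> V_iter k n F i"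
proof (induction S rule: finite_induct)
  case empty thus ?case by simp
next
  case (insert x S)
  then obtain i where i: "S \<subseteq> V_iter k n F i" by auto
  from insert.prems obtain j where j: "x \<in> V_iter k n F j" unfolding V_bad_def by auto
  have "S \<subseteq> V_iter k n F (max i j)" using i V_iter_mono[of i "max i j" k n F] by auto
  moreover have "x \<in> V_iter k n F (max i j)" using j V_iter_mono[of j "max i j"] by auto
  ultimately show ?case by auto
qed

lemma C_bad_vars:
  assumes "j \<in> C_bad k n F"
  shows "j < length F" "var_cl (F ! j) \<subseteq> V_bad k n F"
proof -
  from assms have j: "j < length F" and c: "card (var_cl (F ! j) \<inter> V_bad k n F) \<ge> 3"
    unfolding C_bad_def clauses_hit_def by auto
  show "j < length F" by fact
  obtain i where i: "var_cl (F ! j) \<inter> V_bad k n F \<subseteq> V_iter k n F i"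
    using finite_sub_V_bad[of "var_cl (F ! j) \<inter> V_bad k n F" k n F] by auto
  have "card (var_cl (F ! j) \<inter> V_bad k n F) \<le> card (var_cl (F ! j) \<inter> V_iter k n F i)"
    using i by (intro card_mono) auto
  with c have "j \<in> clauses_hit F (V_iter k n F i)" using j unfolding clauses_hit_def by auto
  hence "var_cl (F ! j) \<subseteq> V_iter k n F (Suc i)" by auto
  thus "var_cl (F ! j) \<subseteq> V_bad k n F" using V_iter_sub_bad[of k n F "Suc i"] by auto
qed

lemma kcnf_clause:
  assumes "F \<in> kcnf_formulas k n m" "j < length F"
  shows "length (F ! j) = k" "var_cl (F ! j) \<subseteq> {0..<n}" "card (var_cl (F ! j)) \<le> k"
proof -
  have c: "F ! j \<in> set F" using assms by auto
  show "length (F ! j) = k" using assms c unfolding kcnf_formulas_def by auto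
  have "\<forall>l\<in>set (F ! j). fst l < n" using assms(1) c unfolding kcnf_formulas_def by blast
  thus "var_cl (F ! j) \<subseteq> {0..<n}" unfolding var_cl_def by auto
  show "card (var_cl (F ! j)) \<le> k" using card_var_cl_le[of "F ! j"] \<open>length (F ! j) = k\<close> by simp
qed

lemma V_iter_sub:
  assumes "F \<in> kcnf_formulas k n m"
  shows "V_iter k n F i \<subseteq> {0..<n}"
proof (induction i)
  case 0 thus ?case by (auto simp: high_deg_def)
next
  case (Suc i)
  have "var_cl (F ! j) \<subseteq> {0..<n}" if "j \<in> clauses_hit F (V_iter k n F i)" for j
    using that kcnf_clause(2)[OF assms] unfolding clauses_hit_def by auto
  thus ?case using Suc by auto
qed

lemma V_bad_sub:
  assumes "F \<in> kcnf_formulas k n m"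
  shows "V_bad k n F \<subseteq> {0..<n}"
  using V_iter_sub[OF assms] unfolding V_bad_def by auto

lemma good_not_high:
  assumes "y \<in> V_good k n F"
  shows "int (degree F y) < Delta k"
proof -
  have "y \<notin> V_iter k n F 0" using assms V_iter_sub_bad[of k n F 0] unfolding V_good_def by auto
  moreover have "y < n" using assms unfolding V_good_def by auto
  ultimately show ?thesis by (auto simp: high_deg_def)
qed

lemma C_good_bad_le2:
  assumes "j \<in> C_good k n F"
  shows "j < length F" "card (var_cl (F ! j) \<inter> V_bad k n F) \<le> 2"
  using assms unfolding C_good_def C_bad_def clauses_hit_def by auto

lemma degree_nth: "degree F y = (\<Sum>j<length F. length (filter (\<lambda>l. fst l = y) (F ! j)))"
proof -
  have "degree F y = sum_list (map (\<lambda>c. length (filter (\<lambda>l. fst l = y) c)) F)"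
    unfolding degree_def by simp
  also have "\<dots> = (\<Sum>j = 0..<length F. length (filter (\<lambda>l. fst l = y) (F ! j)))"
    by (subst sum_list_sum_nth) simp
  finally show ?thesis by (simp add: atLeast0LessThan)
qed

lemma card_clauses_with_var:
  "card {j. j < length F \<and> y \<in> var_cl (F ! j)} \<le> degree F y"
proof -
  have "card {j. j < length F \<and> y \<in> var_cl (F ! j)} = (\<Sum>j\<in>{j\<in>{..<length F}. y \<in> var_cl (F ! j)}. (1::nat))"
    by simp
  also have "\<dots> = (\<Sum>j<length F. if y \<in> var_cl (F ! j) then 1 else 0)"
    by (subst sum.inter_filter) auto
  also have "\<dots> \<le> (\<Sum>j<length F. length (filter (\<lambda>l. fst l = y) (F ! j)))"
  proof (intro sum_mono)
    fix j
    show "(if y \<in> var_cl (F ! j) then 1 else 0) \<le> length (filter (\<lambda>l. fst l = y) (F ! j))"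
    proof (cases "y \<in> var_cl (F ! j)")
      case True
      then obtain l where "l \<in> set (F ! j)" "fst l = y" unfolding var_cl_def by auto
      hence "filter (\<lambda>l. fst l = y) (F ! j) \<noteq> []" by (auto simp: filter_empty_conv)
      thus ?thesis using True by (cases "filter (\<lambda>l. fst l = y) (F ! j)") auto
    qed simp
  qed
  also have "\<dots> = degree F y" by (rule degree_nth[symmetric])
  finally show ?thesis .
qed

lemma Delta_bounds:
  "Delta k \<ge> 1" "real_of_int (Delta k) < 2 powr ((r0 - 2 * delta) * real k) + 1"
proof -
  have p: "2 powr ((r0 - 2 * delta) * real k) \<ge> 1"
    unfolding r0_def delta_def by (intro ge_one_powr_ge_zero) auto
  show "Delta k \<ge> 1" unfolding Delta_def using p by (simp add: le_ceiling_iff)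
  show "real_of_int (Delta k) < 2 powr ((r0 - 2 * delta) * real k) + 1"
    unfolding Delta_def by linarith
qed

lemma good_degree_le:
  assumes "y \<in> V_good k n F"
  shows "degree F y \<le> nat (Delta k) - 1"
  using good_not_high[OF assms] Delta_bounds(1)[of k] by linarith

lemma card_PiE_fix:
  assumes Y: "finite Y" and T: "T \<subseteq> Y"
  shows "card (PiE Y (\<lambda>y. if y \<in> T then (UNIV :: bool set) else {h y})) = 2 ^ card T"
proof -
  have "card (PiE Y (\<lambda>y. if y \<in> T then (UNIV :: bool set) else {h y}))
      = (\<Prod>y\<in>Y. card (if y \<in> T then (UNIV :: bool set) else {h y}))"
    using Y by (rule card_PiE)
  also have "\<dots> = (\<Prod>y\<in>Y. if y \<in> T then 2 else 1)"
    by (intro prod.cong) auto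
  also have "\<dots> = 2 ^ card (Y \<inter> T)"
    using Y by (simp add: prod.If_cases)
  also have "Y \<inter> T = T" using T by auto
  finally show ?thesis .
qed

lemma depends_avoid:
  assumes "\<And>j. j \<in> S \<Longrightarrow> depends Om (B j) (W j)"
  shows "depends Om (avoid Om B S) (\<Union>j\<in>S. W j)"
  unfolding depends_def
proof (intro ballI impI)
  fix f g assume f: "f \<in> Om" and g: "g \<in> Om" and fg: "\<forall>x\<in>(\<Union>j\<in>S. W j). f x = g x"
  have "f \<in> B j \<longleftrightarrow> g \<in> B j" if j: "j \<in> S" for j
    using assms[OF j] f g fg j unfolding depends_def by blast
  thus "f \<in> avoid Om B S \<longleftrightarrow> g \<in> avoid Om B S" using f g unfolding avoid_def by blast
qed


section \<open>Part 2: marginal bound\<close>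

locale p2 =
  fixes k n m :: nat and F :: cnf and Vm Va Vc V :: "nat set" and Lam :: "nat \<Rightarrow> bool"
    and v :: nat and b :: bool and D :: nat and x :: real
  assumes F: "F \<in> kcnf_formulas k n m"
    and mk: "marking k n F r0 Vm Va Vc"
    and v: "v \<in> Vm \<union> Va" and VV: "V \<subseteq> Vm \<union> Va" and vV: "v \<notin> V"
    and Dg: "\<And>y. y \<in> V_good k n F \<Longrightarrow> degree F y \<le> D"
    and x0: "0 \<le> x" and x1: "x < 1"
    and lll: "2 powr (-(2 * r0 * (real k - 3))) \<le> x * (1 - x) ^ (k * D)"
begin

definition "Y = {0..<n} - V"
definition "Bd = V_bad k n F"
definition "R = Y - Bd"
definition "val \<tau> y = (if y \<in> V then Lam y else \<tau> y)"
definition "sat \<tau> c = (\<exists>l\<in>set c. val \<tau> (fst l) = snd l)"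
definition "Om' \<sigma> = PiE Y (\<lambda>y. if y \<in> R then (UNIV :: bool set) else {\<sigma> y})"
definition "W j = var_cl (F ! j) \<inter> R"
definition "Bev \<sigma> j = {\<tau> \<in> Om' \<sigma>. \<not> sat \<tau> (F ! j)}"
definition "Nb j = {j'. W j' \<inter> W j \<noteq> {}}"
definition "NA = {j. v \<in> W j}"
definition "Aev \<sigma> = {\<tau> \<in> Om' \<sigma>. \<tau> v = b}"
definition "I = C_good k n F"

lemma mk_facts:
  "Vm \<inter> Va = {}" "Vm \<inter> Vc = {}" "Va \<inter> Vc = {}" "Vm \<union> Va \<union> Vc = {0..<n}"
  "V_bad k n F \<subseteq> Vc" "Vm \<subseteq> V_good k n F" "Va \<subseteq> V_good k n F"
  "\<And>j. j \<in> C_good k n F \<Longrightarrow> real (card (var_cl (F ! j) \<inter> (Vc - V_bad k n F))) \<ge> 2 * r0 * (real k - 3)"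
  using mk unfolding marking_def r_distributed_def by auto

lemma Bd_sub: "Bd \<subseteq> {0..<n}" unfolding Bd_def using V_bad_sub[OF F] .

lemma V_good_eq: "V_good k n F = {0..<n} - Bd" unfolding V_good_def Bd_def ..

lemma BdV: "Bd \<inter> V = {}" using VV mk_facts(6,7) V_good_eq by auto

lemma BdY: "Bd \<subseteq> Y" using Bd_sub BdV unfolding Y_def by auto

lemma finY[simp]: "finite Y" unfolding Y_def by auto

lemma R_good: "R \<subseteq> V_good k n F" unfolding R_def Y_def V_good_eq by auto

lemma vR: "v \<in> R"
proof -
  have "v \<in> V_good k n F" using v mk_facts(6,7) by auto
  thus ?thesis using vV unfolding R_def Y_def V_good_eq by auto
qed

lemma Vc_R: "Vc - Bd \<subseteq> R"
proof -
  have "Vc \<subseteq> {0..<n}" using mk_facts(4) by auto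
  moreover have "Vc \<inter> V = {}" using VV mk_facts(2,3) by auto
  ultimately show ?thesis unfolding R_def Y_def by auto
qed

lemma RY: "R \<subseteq> Y" unfolding R_def by auto

lemma sat_iff: "sat \<tau> c \<longleftrightarrow> (\<exists>l\<in>set c. fst l \<in> V \<and> Lam (fst l) = snd l) \<or> (\<exists>l\<in>set c. fst l \<notin> V \<and> \<tau> (fst l) = snd l)"
  unfolding sat_def val_def by (auto split: if_splits)

lemma Omega_eq: "Omega n F V Lam = {\<tau> \<in> PiE Y (\<lambda>_. UNIV). \<forall>c\<in>set F. sat \<tau> c}"
proof -
  have "(\<forall>c'\<in>set (reduce F V Lam). \<exists>l\<in>set c'. \<tau> (fst l) = snd l) \<longleftrightarrow> (\<forall>c\<in>set F. sat \<tau> c)" for \<tau>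
  proof
    assume H: "\<forall>c'\<in>set (reduce F V Lam). \<exists>l\<in>set c'. \<tau> (fst l) = snd l"
    show "\<forall>c\<in>set F. sat \<tau> c"
    proof
      fix c assume c: "c \<in> set F"
      show "sat \<tau> c"
      proof (cases "\<exists>l\<in>set c. fst l \<in> V \<and> Lam (fst l) = snd l")
        case True thus ?thesis unfolding sat_iff by blast
      next
        case False
        hence "filter (\<lambda>l. fst l \<notin> V) c \<in> set (reduce F V Lam)" unfolding reduce_def using c by auto
        then obtain l where "l \<in> set (filter (\<lambda>l. fst l \<notin> V) c)" "\<tau> (fst l) = snd l" using H by blast
        thus ?thesis unfolding sat_iff by auto
      qed
    qed
  next
    assume H: "\<forall>c\<in>set F. sat \<tau> c"
    show "\<forall>c'\<in>set (reduce F V Lam). \<exists>l\<in>set c'. \<tau> (fst l) = snd l"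
    proof
      fix c' assume "c' \<in> set (reduce F V Lam)"
      then obtain c where c: "c \<in> set F" "\<not> (\<exists>l\<in>set c. fst l \<in> V \<and> Lam (fst l) = snd l)"
        and c': "c' = filter (\<lambda>l. fst l \<notin> V) c" unfolding reduce_def by auto
      have "sat \<tau> c" using H c by auto
      then obtain l where "l \<in> set c" "fst l \<notin> V" "\<tau> (fst l) = snd l" using c(2) unfolding sat_iff by blast
      thus "\<exists>l\<in>set c'. \<tau> (fst l) = snd l" unfolding c' by (intro bexI[of _ l]) auto
    qed
  qed
  thus ?thesis unfolding Omega_def Y_def by auto
qed

lemma finOm'[simp]: "finite (Om' \<sigma>)"
  unfolding Om'_def by (intro finite_PiE) auto

lemma card_Om': "card (Om' \<sigma>) = 2 ^ card R"
  unfolding Om'_def by (rule card_PiE_fix[OF finY RY])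

lemma vars_lt_n: "j < length F \<Longrightarrow> l \<in> set (F ! j) \<Longrightarrow> fst l < n"
  using kcnf_clause(2)[OF F] unfolding var_cl_def by force

lemma dep_B: assumes j: "j < length F" shows "depends (Om' \<sigma>) (Bev \<sigma> j) (W j)"
  unfolding depends_def
proof (intro ballI impI)
  fix f g assume f: "f \<in> Om' \<sigma>" and g: "g \<in> Om' \<sigma>" and fg: "\<forall>y\<in>W j. f y = g y"
  have "val f (fst l) = val g (fst l)" if l: "l \<in> set (F ! j)" for l
  proof (cases "fst l \<in> V")
    case True thus ?thesis by (simp add: val_def)
  next
    case False
    have "fst l \<in> Y" using vars_lt_n[OF j l] False unfolding Y_def by auto
    show ?thesis
    proof (cases "fst l \<in> R")
      case True
      hence "fst l \<in> W j" using l unfolding W_def var_cl_def by auto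
      thus ?thesis using fg False by (simp add: val_def)
    next
      case notR: False
      have "f (fst l) = \<sigma> (fst l)" "g (fst l) = \<sigma> (fst l)"
        using f g \<open>fst l \<in> Y\<close> notR unfolding Om'_def by (auto simp: PiE_iff)
      thus ?thesis using False by (simp add: val_def)
    qed
  qed
  hence "sat f (F ! j) = sat g (F ! j)" unfolding sat_def by auto
  thus "f \<in> Bev \<sigma> j \<longleftrightarrow> g \<in> Bev \<sigma> j" using f g unfolding Bev_def by auto
qed

lemma card_B:
  assumes j: "j \<in> I"
  shows "real (card (Bev \<sigma> j)) \<le> x * (1 - x) ^ (k * D) * real (card (Om' \<sigma>))"
proof -
  have jl: "j < length F" using j unfolding I_def C_good_def by auto
  define lit where "lit y = (SOME l. l \<in> set (F ! j) \<and> fst l = y)" for y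
  have lit: "lit y \<in> set (F ! j) \<and> fst (lit y) = y" if "y \<in> W j" for y
  proof -
    from that have "\<exists>l. l \<in> set (F ! j) \<and> fst l = y" unfolding W_def var_cl_def by auto
    from someI_ex[OF this] show ?thesis unfolding lit_def .
  qed
  define h where "h y = (if y \<in> W j then \<not> snd (lit y) else \<sigma> y)" for y
  have WR: "W j \<subseteq> R" unfolding W_def by auto
  have sub: "Bev \<sigma> j \<subseteq> PiE Y (\<lambda>y. if y \<in> R - W j then (UNIV :: bool set) else {h y})"
  proof
    fix \<tau> assume t: "\<tau> \<in> Bev \<sigma> j"
    hence tO: "\<tau> \<in> Om' \<sigma>" and ns: "\<not> sat \<tau> (F ! j)" unfolding Bev_def by auto
    have "\<tau> y = h y" if y: "y \<in> Y" "y \<notin> R - W j" for y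
    proof (cases "y \<in> W j")
      case True
      have yV: "y \<notin> V" using True WR RY unfolding Y_def by auto
      have l1: "lit y \<in> set (F ! j)" and l2: "fst (lit y) = y" using lit[OF True] by auto
      have "val \<tau> (fst (lit y)) \<noteq> snd (lit y)" using ns l1 unfolding sat_def by blast
      hence "\<tau> y \<noteq> snd (lit y)" using yV l2 by (simp add: val_def)
      moreover have "h y = (\<not> snd (lit y))" using True by (simp add: h_def)
      ultimately show ?thesis by simp
    next
      case False
      hence yR: "y \<notin> R" using y by auto
      have "\<tau> y \<in> (if y \<in> R then UNIV else {\<sigma> y})" using tO y(1) unfolding Om'_def by (rule PiE_mem)
      thus ?thesis using yR False by (simp add: h_def)
    qed
    moreover have "\<tau> \<in> extensional Y" using tO unfolding Om'_def PiE_iff by blast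
    ultimately show "\<tau> \<in> PiE Y (\<lambda>y. if y \<in> R - W j then (UNIV :: bool set) else {h y})"
      unfolding PiE_iff by auto
  qed
  have c1: "card (Bev \<sigma> j) \<le> 2 ^ card (R - W j)"
  proof -
    have "card (Bev \<sigma> j) \<le> card (PiE Y (\<lambda>y. if y \<in> R - W j then (UNIV :: bool set) else {h y}))"
      using sub by (intro card_mono) (auto intro: finite_PiE)
    also have "\<dots> = 2 ^ card (R - W j)" using RY by (intro card_PiE_fix) auto
    finally show ?thesis .
  qed
  have finR: "finite R" using finite_subset[OF RY finY] .
  have cW: "card (W j) \<le> card R" by (rule card_mono[OF finR WR])
  have cR: "card R = card (R - W j) + card (W j)"
    using card_Diff_subset[OF finite_subset[OF WR finR] WR] cW by simp
  have "real (card (Bev \<sigma> j)) \<le> real ((2::nat) ^ card (R - W j))" using c1 by (simp only: of_nat_le_iff)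
  also have "\<dots> = 2 ^ card (R - W j)" by simp
  also have "\<dots> = 2 powr (- real (card (W j))) * real (card (Om' \<sigma>))"
  proof -
    have e1: "real (card (Om' \<sigma>)) = 2 ^ card (R - W j) * 2 ^ card (W j)"
      unfolding card_Om' cR by (simp add: power_add)
    have e2: "2 powr (- real (card (W j))) = 1 / 2 ^ card (W j)"
      by (simp add: powr_minus powr_realpow divide_inverse)
    show ?thesis unfolding e1 e2 by simp
  qed
  also have "\<dots> \<le> 2 powr (-(2 * r0 * (real k - 3))) * real (card (Om' \<sigma>))"
  proof -
    have "real (card (var_cl (F ! j) \<inter> (Vc - V_bad k n F))) \<le> real (card (W j))"
      using Vc_R unfolding W_def Bd_def by (intro of_nat_mono card_mono) auto
    hence "2 * r0 * (real k - 3) \<le> real (card (W j))" using mk_facts(8)[of j] j unfolding I_def by auto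
    thus ?thesis by (intro mult_right_mono) auto
  qed
  also have "\<dots> \<le> x * (1 - x) ^ (k * D) * real (card (Om' \<sigma>))"
    using lll by (intro mult_right_mono) auto
  finally show ?thesis .
qed

lemma card_W: "j < length F \<Longrightarrow> card (W j) \<le> k"
  using kcnf_clause(3)[OF F] unfolding W_def
  by (meson card_mono finite_var_cl inf_le1 le_trans)

lemma deg_count: assumes y: "y \<in> R" shows "card {j. j < length F \<and> y \<in> var_cl (F ! j)} \<le> D"
  using card_clauses_with_var[of F y] Dg[of y] y R_good by auto

lemma card_Nb: assumes j: "j \<in> I" shows "card (Nb j \<inter> I) \<le> k * D"
proof -
  have jl: "j < length F" using j unfolding I_def C_good_def by auto
  have "Nb j \<inter> I \<subseteq> (\<Union>y\<in>W j. {j'. j' < length F \<and> y \<in> var_cl (F ! j')})"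
    unfolding Nb_def I_def C_good_def W_def by auto
  hence "card (Nb j \<inter> I) \<le> card (\<Union>y\<in>W j. {j'. j' < length F \<and> y \<in> var_cl (F ! j')})"
    by (intro card_mono) (rule finite_subset[of _ "{..<length F}"], auto)
  also have "\<dots> \<le> (\<Sum>y\<in>W j. card {j'. j' < length F \<and> y \<in> var_cl (F ! j')})"
    by (intro card_UN_le) (simp add: W_def)
  also have "\<dots> \<le> (\<Sum>y\<in>W j. D)"
    by (intro sum_mono deg_count) (auto simp: W_def)
  also have "\<dots> = card (W j) * D" by simp
  also have "\<dots> \<le> k * D" using card_W[OF jl] by simp
  finally show ?thesis .
qed

lemma finI: "finite I" unfolding I_def C_good_def by auto

lemma is_lll: "lll_setting (Om' \<sigma>) (Bev \<sigma>) I Nb x (k * D)"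
proof
  show "finite (Om' \<sigma>)" by simp
  show "finite I" by (rule finI)
  show "0 \<le> x" "x < 1" using x0 x1 by auto
  show "real (card (Bev \<sigma> i)) \<le> x * (1 - x) ^ (k * D) * real (card (Om' \<sigma>))" if "i \<in> I" for i
    using card_B[OF that] .
  show "card (Nb i \<inter> I) \<le> k * D" if "i \<in> I" for i using card_Nb[OF that] .
  fix i S assume i: "i \<in> I" and S: "S \<subseteq> I - Nb i - {i}"
  have il: "i < length F" using i unfolding I_def C_good_def by auto
  have "card (Bev \<sigma> i \<inter> avoid (Om' \<sigma>) (Bev \<sigma>) S) * card (Om' \<sigma>) = card (Bev \<sigma> i) * card (avoid (Om' \<sigma>) (Bev \<sigma>) S)"
    unfolding Om'_def
  proof (rule indep_card)
    show "finite (PiE Y (\<lambda>y. if y \<in> R then (UNIV :: bool set) else {\<sigma> y}))" by (intro finite_PiE) auto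
    show "Bev \<sigma> i \<subseteq> PiE Y (\<lambda>y. if y \<in> R then UNIV else {\<sigma> y})" unfolding Bev_def Om'_def by auto
    show "avoid (PiE Y (\<lambda>y. if y \<in> R then UNIV else {\<sigma> y})) (Bev \<sigma>) S \<subseteq> PiE Y (\<lambda>y. if y \<in> R then UNIV else {\<sigma> y})"
      unfolding avoid_def by auto
    show "depends (PiE Y (\<lambda>y. if y \<in> R then UNIV else {\<sigma> y})) (Bev \<sigma> i) (W i)"
      using dep_B[OF il] unfolding Om'_def .
    show "depends (PiE Y (\<lambda>y. if y \<in> R then UNIV else {\<sigma> y})) (avoid (PiE Y (\<lambda>y. if y \<in> R then UNIV else {\<sigma> y})) (Bev \<sigma>) S) (\<Union>j\<in>S. W j)"
    proof (rule depends_avoid)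
      fix j assume "j \<in> S"
      hence "j < length F" using S unfolding I_def C_good_def by auto
      thus "depends (PiE Y (\<lambda>y. if y \<in> R then UNIV else {\<sigma> y})) (Bev \<sigma> j) (W j)"
        using dep_B unfolding Om'_def by blast
    qed
    show "W i \<inter> (\<Union>j\<in>S. W j) = {}" using S unfolding Nb_def by auto
  qed
  hence "real (card (Bev \<sigma> i \<inter> avoid (Om' \<sigma>) (Bev \<sigma>) S) * card (Om' \<sigma>)) = real (card (Bev \<sigma> i) * card (avoid (Om' \<sigma>) (Bev \<sigma>) S))"
    by (rule arg_cong)
  thus "real (card (Bev \<sigma> i \<inter> avoid (Om' \<sigma>) (Bev \<sigma>) S)) * real (card (Om' \<sigma>)) =
       real (card (Bev \<sigma> i)) * real (card (avoid (Om' \<sigma>) (Bev \<sigma>) S))"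
    by simp
qed


lemma Aev_eq: "Aev \<sigma> = PiE Y (\<lambda>y. if y \<in> R - {v} then (UNIV :: bool set) else {(\<sigma>(v := b)) y})"
proof (intro equalityI subsetI)
  have vY: "v \<in> Y" using vR RY by auto
  fix \<tau> assume a: "\<tau> \<in> Aev \<sigma>"
  hence tO: "\<tau> \<in> Om' \<sigma>" and tv: "\<tau> v = b" unfolding Aev_def by auto
  have "\<tau> y \<in> (if y \<in> R - {v} then (UNIV :: bool set) else {(\<sigma>(v := b)) y})" if y: "y \<in> Y" for y
  proof (cases "y = v")
    case True thus ?thesis using tv by simp
  next
    case False
    have "\<tau> y \<in> (if y \<in> R then UNIV else {\<sigma> y})" using tO y unfolding Om'_def by (rule PiE_mem)
    thus ?thesis using False by (cases "y \<in> R") auto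
  qed
  moreover have "\<tau> \<in> extensional Y" using tO unfolding Om'_def PiE_iff by blast
  ultimately show "\<tau> \<in> PiE Y (\<lambda>y. if y \<in> R - {v} then (UNIV :: bool set) else {(\<sigma>(v := b)) y})"
    unfolding PiE_iff by blast
next
  have vY: "v \<in> Y" using vR RY by auto
  fix \<tau> assume a: "\<tau> \<in> PiE Y (\<lambda>y. if y \<in> R - {v} then (UNIV :: bool set) else {(\<sigma>(v := b)) y})"
  have mem: "\<tau> y \<in> (if y \<in> R - {v} then (UNIV :: bool set) else {(\<sigma>(v := b)) y})" if "y \<in> Y" for y
    using a that by (rule PiE_mem)
  have tv: "\<tau> v = b" using mem[OF vY] by simp
  have "\<tau> y \<in> (if y \<in> R then UNIV else {\<sigma> y})" if y: "y \<in> Y" for y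
  proof (cases "y = v")
    case True thus ?thesis using vR by simp
  next
    case False
    thus ?thesis using mem[OF y] by (cases "y \<in> R") auto
  qed
  moreover have "\<tau> \<in> extensional Y" using a unfolding PiE_iff by blast
  ultimately have "\<tau> \<in> Om' \<sigma>" unfolding Om'_def PiE_iff by blast
  thus "\<tau> \<in> Aev \<sigma>" using tv unfolding Aev_def by auto
qed

lemma Aev_card: "2 * card (Aev \<sigma>) = card (Om' \<sigma>)"
proof -
  have finR: "finite R" using finite_subset[OF RY finY] .
  have "card (Aev \<sigma>) = 2 ^ card (R - {v})" unfolding Aev_eq using RY by (intro card_PiE_fix) auto
  also have "card (R - {v}) = card R - 1" using vR finR by simp
  finally have "card (Aev \<sigma>) = 2 ^ (card R - 1)" .
  moreover have "card R \<ge> 1" using vR finR by (metis One_nat_def card_0_eq empty_iff less_one not_less)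
  ultimately show ?thesis unfolding card_Om' by (metis Suc_diff_1 less_le_trans power_Suc zero_less_one)
qed

lemma cond_bound:
  "real (card (Aev \<sigma> \<inter> avoid (Om' \<sigma>) (Bev \<sigma>) I)) * (1 - x) ^ D
     \<le> 1/2 * real (card (avoid (Om' \<sigma>) (Bev \<sigma>) I))"
proof -
  interpret L: lll_setting "Om' \<sigma>" "Bev \<sigma>" I Nb x "k * D" by (rule is_lll)
  have c: "real (card (Aev \<sigma> \<inter> avoid (Om' \<sigma>) (Bev \<sigma>) I)) * (1 - x) ^ card (NA \<inter> I) * real (card (Om' \<sigma>))
          \<le> real (card (Aev \<sigma>)) * real (card (avoid (Om' \<sigma>) (Bev \<sigma>) I))"
  proof (rule L.conditional)
    show "Aev \<sigma> \<subseteq> Om' \<sigma>" unfolding Aev_def by auto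
    fix S assume S: "S \<subseteq> I - NA"
    have "card (Aev \<sigma> \<inter> avoid (Om' \<sigma>) (Bev \<sigma>) S) * card (Om' \<sigma>) = card (Aev \<sigma>) * card (avoid (Om' \<sigma>) (Bev \<sigma>) S)"
      unfolding Om'_def
    proof (rule indep_card)
      show "finite (PiE Y (\<lambda>y. if y \<in> R then (UNIV :: bool set) else {\<sigma> y}))" by (intro finite_PiE) auto
      show "Aev \<sigma> \<subseteq> PiE Y (\<lambda>y. if y \<in> R then UNIV else {\<sigma> y})" unfolding Aev_def Om'_def by auto
      show "avoid (PiE Y (\<lambda>y. if y \<in> R then UNIV else {\<sigma> y})) (Bev \<sigma>) S \<subseteq> PiE Y (\<lambda>y. if y \<in> R then UNIV else {\<sigma> y})"
        unfolding avoid_def by auto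
      show "depends (PiE Y (\<lambda>y. if y \<in> R then UNIV else {\<sigma> y})) (Aev \<sigma>) {v}"
        unfolding depends_def Aev_def Om'_def by auto
      show "depends (PiE Y (\<lambda>y. if y \<in> R then UNIV else {\<sigma> y})) (avoid (PiE Y (\<lambda>y. if y \<in> R then UNIV else {\<sigma> y})) (Bev \<sigma>) S) (\<Union>j\<in>S. W j)"
      proof (rule depends_avoid)
        fix j assume "j \<in> S"
        hence "j < length F" using S unfolding I_def C_good_def by auto
        thus "depends (PiE Y (\<lambda>y. if y \<in> R then UNIV else {\<sigma> y})) (Bev \<sigma> j) (W j)"
          using dep_B unfolding Om'_def by blast
      qed
      show "{v} \<inter> (\<Union>j\<in>S. W j) = {}" using S unfolding NA_def by auto
    qed
    hence "real (card (Aev \<sigma> \<inter> avoid (Om' \<sigma>) (Bev \<sigma>) S) * card (Om' \<sigma>)) = real (card (Aev \<sigma>) * card (avoid (Om' \<sigma>) (Bev \<sigma>) S))"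
      by (rule arg_cong)
    thus "real (card (Aev \<sigma> \<inter> avoid (Om' \<sigma>) (Bev \<sigma>) S)) * real (card (Om' \<sigma>)) =
       real (card (Aev \<sigma>)) * real (card (avoid (Om' \<sigma>) (Bev \<sigma>) S))" by simp
  qed
  have NAc: "card (NA \<inter> I) \<le> D"
  proof -
    have "NA \<inter> I \<subseteq> {j. j < length F \<and> v \<in> var_cl (F ! j)}"
      unfolding NA_def I_def C_good_def W_def by auto
    hence "card (NA \<inter> I) \<le> card {j. j < length F \<and> v \<in> var_cl (F ! j)}"
      by (intro card_mono) auto
    also have "\<dots> \<le> D" by (rule deg_count[OF vR])
    finally show ?thesis .
  qed
  have pw: "(1 - x) ^ D \<le> (1 - x) ^ card (NA \<inter> I)"
    using NAc x0 x1 by (intro power_decreasing) auto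
  have Opos: "real (card (Om' \<sigma>)) > 0" unfolding card_Om' by simp
  have A2: "real (card (Aev \<sigma>)) = real (card (Om' \<sigma>)) / 2"
    using arg_cong[OF Aev_card[of \<sigma>], of real] by simp
  have "real (card (Aev \<sigma> \<inter> avoid (Om' \<sigma>) (Bev \<sigma>) I)) * (1 - x) ^ D * real (card (Om' \<sigma>))
     \<le> real (card (Aev \<sigma> \<inter> avoid (Om' \<sigma>) (Bev \<sigma>) I)) * (1 - x) ^ card (NA \<inter> I) * real (card (Om' \<sigma>))"
    using pw by (intro mult_right_mono mult_left_mono) auto
  also have "\<dots> \<le> real (card (Om' \<sigma>)) * (1/2 * real (card (avoid (Om' \<sigma>) (Bev \<sigma>) I)))"
    using c A2 by simp
  finally show ?thesis using Opos by (simp add: mult.commute)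
qed

lemma slice:
  assumes t0: "\<tau>0 \<in> Omega n F V Lam" and sg: "\<sigma> = restrict \<tau>0 Bd"
  shows "{\<tau> \<in> Omega n F V Lam. restrict \<tau> Bd = \<sigma>} = avoid (Om' \<sigma>) (Bev \<sigma>) I"
proof (intro equalityI subsetI)
  fix \<tau> assume "\<tau> \<in> {\<tau> \<in> Omega n F V Lam. restrict \<tau> Bd = \<sigma>}"
  hence t: "\<tau> \<in> PiE Y (\<lambda>_. UNIV)" "\<forall>c\<in>set F. sat \<tau> c" and r: "restrict \<tau> Bd = \<sigma>"
    unfolding Omega_eq by auto
  have "\<tau> y = \<sigma> y" if "y \<in> Bd" for y
  proof -
    have "\<sigma> y = restrict \<tau> Bd y" using r by simp
    also have "\<dots> = \<tau> y" using that by simp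
    finally show ?thesis by simp
  qed
  hence "\<tau> \<in> Om' \<sigma>" using t(1) unfolding Om'_def R_def by (auto simp: PiE_iff)
  moreover have "\<tau> \<notin> Bev \<sigma> j" if "j \<in> I" for j
  proof -
    have "j < length F" using that unfolding I_def C_good_def by auto
    hence "sat \<tau> (F ! j)" using t(2) by auto
    thus ?thesis unfolding Bev_def by auto
  qed
  ultimately show "\<tau> \<in> avoid (Om' \<sigma>) (Bev \<sigma>) I" unfolding avoid_def by auto
next
  fix \<tau> assume a: "\<tau> \<in> avoid (Om' \<sigma>) (Bev \<sigma>) I"
  hence tO: "\<tau> \<in> Om' \<sigma>" and satI: "\<And>j. j \<in> I \<Longrightarrow> sat \<tau> (F ! j)"
    unfolding avoid_def Bev_def by auto
  have tB: "\<tau> y = \<tau>0 y" if y: "y \<in> Bd" for y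
  proof -
    have "y \<in> Y" "y \<notin> R" using y BdY unfolding R_def by auto
    have "\<tau> y \<in> (if y \<in> R then UNIV else {\<sigma> y})" using tO \<open>y \<in> Y\<close> unfolding Om'_def by (rule PiE_mem)
    hence "\<tau> y = \<sigma> y" using \<open>y \<notin> R\<close> by simp
    also have "\<sigma> y = \<tau>0 y" using sg y by simp
    finally show ?thesis .
  qed
  have t0s: "\<forall>c\<in>set F. sat \<tau>0 c" using t0 unfolding Omega_eq by auto
  have "sat \<tau> c" if c: "c \<in> set F" for c
  proof -
    obtain j where j: "j < length F" "c = F ! j" using c by (auto simp: in_set_conv_nth)
    show ?thesis
    proof (cases "j \<in> I")
      case True thus ?thesis using satI j by auto
    next
      case False
      hence "j \<in> C_bad k n F" using j unfolding I_def C_good_def by auto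
      hence vb: "var_cl c \<subseteq> Bd" using C_bad_vars(2) j unfolding Bd_def by auto
      have "val \<tau> (fst l) = val \<tau>0 (fst l)" if l: "l \<in> set c" for l
      proof -
        have "fst l \<in> Bd" using vb l unfolding var_cl_def by auto
        thus ?thesis using tB BdV unfolding val_def by auto
      qed
      hence "sat \<tau> c = sat \<tau>0 c" unfolding sat_def by auto
      thus ?thesis using t0s c by auto
    qed
  qed
  moreover have "\<tau> \<in> PiE Y (\<lambda>_. UNIV)" using tO unfolding Om'_def by (auto simp: PiE_iff)
  moreover have "restrict \<tau> Bd = \<sigma>" unfolding sg by (rule ext) (simp add: tB)
  ultimately show "\<tau> \<in> {\<tau> \<in> Omega n F V Lam. restrict \<tau> Bd = \<sigma>}" unfolding Omega_eq by auto
qed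

lemma finOmega: "finite (Omega n F V Lam)"
proof -
  have "finite (PiE Y (\<lambda>_. (UNIV :: bool set)))" by (intro finite_PiE) auto
  thus ?thesis unfolding Omega_eq by auto
qed

lemma main_card:
  "real (card {\<tau> \<in> Omega n F V Lam. \<tau> v = b}) * (1 - x) ^ D \<le> 1/2 * real (card (Omega n F V Lam))"
proof -
  define Om where "Om = Omega n F V Lam"
  define Ob where "Ob = {\<tau> \<in> Om. \<tau> v = b}"
  define g where "g \<tau> = restrict \<tau> Bd" for \<tau> :: "nat \<Rightarrow> bool"
  define T where "T = g ` Om"
  have finO: "finite Om" using finOmega unfolding Om_def .
  have finOb: "finite Ob" using finO unfolding Ob_def by auto
  have finT: "finite T" using finO unfolding T_def by auto
  have gOb: "g ` Ob \<subseteq> T" unfolding T_def Ob_def by auto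
  have gO: "g ` Om \<subseteq> T" unfolding T_def by auto
  have s1: "card Ob = (\<Sum>\<sigma>\<in>T. card {\<tau> \<in> Ob. g \<tau> = \<sigma>})"
    using sum.group[OF finOb finT gOb, of "\<lambda>_. (1::nat)"] by simp
  have s2: "card Om = (\<Sum>\<sigma>\<in>T. card {\<tau> \<in> Om. g \<tau> = \<sigma>})"
    using sum.group[OF finO finT gO, of "\<lambda>_. (1::nat)"] by simp
  have each: "real (card {\<tau> \<in> Ob. g \<tau> = \<sigma>}) * (1 - x) ^ D \<le> 1/2 * real (card {\<tau> \<in> Om. g \<tau> = \<sigma>})"
    if s: "\<sigma> \<in> T" for \<sigma>
  proof -
    obtain \<tau>0 where t0: "\<tau>0 \<in> Om" and sg: "\<sigma> = restrict \<tau>0 Bd" using s unfolding T_def g_def by auto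
    have e1: "{\<tau> \<in> Om. g \<tau> = \<sigma>} = avoid (Om' \<sigma>) (Bev \<sigma>) I"
      using slice[OF t0[unfolded Om_def] sg] unfolding Om_def g_def .
    have e2: "{\<tau> \<in> Ob. g \<tau> = \<sigma>} = Aev \<sigma> \<inter> avoid (Om' \<sigma>) (Bev \<sigma>) I"
    proof -
      have "{\<tau> \<in> Ob. g \<tau> = \<sigma>} = {\<tau> \<in> {\<tau> \<in> Om. g \<tau> = \<sigma>}. \<tau> v = b}" unfolding Ob_def by auto
      also have "\<dots> = Aev \<sigma> \<inter> avoid (Om' \<sigma>) (Bev \<sigma>) I" unfolding e1 Aev_def avoid_def by auto
      finally show ?thesis .
    qed
    show ?thesis unfolding e1 e2 by (rule cond_bound)
  qed
  have "real (card Ob) * (1 - x) ^ D = (\<Sum>\<sigma>\<in>T. real (card {\<tau> \<in> Ob. g \<tau> = \<sigma>}) * (1 - x) ^ D)"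
    unfolding s1 by (simp add: sum_distrib_right)
  also have "\<dots> \<le> (\<Sum>\<sigma>\<in>T. 1/2 * real (card {\<tau> \<in> Om. g \<tau> = \<sigma>}))"
    by (intro sum_mono each)
  also have "\<dots> = 1/2 * real (card Om)" unfolding s2 by (simp add: sum_distrib_left)
  finally show ?thesis unfolding Ob_def Om_def .
qed

lemma prob_bound: "prob_val n F V Lam v b * (1 - x) ^ D \<le> 1/2"
proof (cases "card (Omega n F V Lam) = 0")
  case True thus ?thesis unfolding prob_val_def by simp
next
  case False
  hence pos: "real (card (Omega n F V Lam)) > 0" by simp
  have "prob_val n F V Lam v b * (1 - x) ^ D
      = real (card {\<tau> \<in> Omega n F V Lam. \<tau> v = b}) * (1 - x) ^ D / real (card (Omega n F V Lam))"
    unfolding prob_val_def by simp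
  also have "\<dots> \<le> 1/2 * real (card (Omega n F V Lam)) / real (card (Omega n F V Lam))"
    using main_card pos by (intro divide_right_mono) auto
  also have "\<dots> = 1/2" using pos by simp
  finally show ?thesis .
qed
end


section \<open>Chernoff-type counting bound\<close>

lemma prod_if_const:
  assumes "finite X"
  shows "(\<Prod>y\<in>X. if P y then (a::real) else b) = a ^ card {y\<in>X. P y} * b ^ card {y\<in>X. \<not> P y}"
proof -
  have "(\<Prod>y\<in>X. if P y then a else b) = (\<Prod>y\<in>X \<inter> {y. P y}. a) * (\<Prod>y\<in>X \<inter> - {y. P y}. b)"
    using assms by (rule prod.If_cases)
  also have "X \<inter> {y. P y} = {y\<in>X. P y}" by auto
  also have "X \<inter> - {y. P y} = {y\<in>X. \<not> P y}" by auto
  finally show ?thesis by simp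
qed

lemma chernoff_count:
  fixes X W :: "nat set" and H :: "nat set" and Nn :: nat and s t :: real
  assumes X: "finite X" and WX: "W \<subseteq> X" and H: "H \<subseteq> {0..<Nn}" and s0: "0 < s" and s1: "s \<le> 1"
  shows "real (card {f \<in> PiE X (\<lambda>_. {0..<Nn}). real (card {y\<in>W. f y \<in> H}) < t}) * s powr t
      \<le> (real (card H) * s + real (Nn - card H)) ^ card W * real Nn ^ card (X - W)"
proof -
  define Om where "Om = PiE X (\<lambda>_. {0..<Nn})"
  define E where "E = {f \<in> Om. real (card {y\<in>W. f y \<in> H}) < t}"
  define g where "g y a = (if y \<in> W \<and> a \<in> H then s else 1)" for y a
  have finOm: "finite Om" unfolding Om_def using X by (intro finite_PiE) auto
  have finW: "finite W" using WX X finite_subset by auto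
  have cnt: "s ^ card {y\<in>W. f y \<in> H} = (\<Prod>y\<in>X. g y (f y))" for f
  proof -
    have "(\<Prod>y\<in>X. g y (f y)) = s ^ card {y\<in>X. y \<in> W \<and> f y \<in> H} * 1 ^ card {y\<in>X. \<not> (y \<in> W \<and> f y \<in> H)}"
      unfolding g_def using X by (rule prod_if_const)
    also have "{y\<in>X. y \<in> W \<and> f y \<in> H} = {y\<in>W. f y \<in> H}" using WX by auto
    finally show ?thesis by simp
  qed
  have "real (card E) * s powr t = (\<Sum>f\<in>E. s powr t)" by simp
  also have "\<dots> \<le> (\<Sum>f\<in>E. s ^ card {y\<in>W. f y \<in> H})"
  proof (intro sum_mono)
    fix f assume "f \<in> E"
    hence lt: "real (card {y\<in>W. f y \<in> H}) \<le> t" unfolding E_def by auto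
    have "s powr t \<le> s powr real (card {y\<in>W. f y \<in> H})"
      using s0 s1 lt by (intro powr_mono') auto
    thus "s powr t \<le> s ^ card {y\<in>W. f y \<in> H}" using s0 by (simp add: powr_realpow)
  qed
  also have "\<dots> \<le> (\<Sum>f\<in>Om. s ^ card {y\<in>W. f y \<in> H})"
    using finOm s0 unfolding E_def by (intro sum_mono2) auto
  also have "\<dots> = (\<Sum>f\<in>Om. \<Prod>y\<in>X. g y (f y))" by (simp add: cnt)
  also have "\<dots> = (\<Prod>y\<in>X. \<Sum>a\<in>{0..<Nn}. g y a)"
    unfolding Om_def by (rule prod_sum_PiE[symmetric]) (use X in auto)
  also have "\<dots> = (\<Prod>y\<in>X. if y \<in> W then real (card H) * s + real (Nn - card H) else real Nn)"
  proof (intro prod.cong refl)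
    fix y assume "y \<in> X"
    show "(\<Sum>a\<in>{0..<Nn}. g y a) = (if y \<in> W then real (card H) * s + real (Nn - card H) else real Nn)"
    proof (cases "y \<in> W")
      case True
      have "(\<Sum>a\<in>{0..<Nn}. g y a) = (\<Sum>a\<in>{0..<Nn}. if a \<in> H then s else 1)"
        unfolding g_def using True by simp
      also have "\<dots> = s * real (card ({0..<Nn} \<inter> H)) + real (card ({0..<Nn} - H))"
        by (simp add: sum.If_cases Diff_eq)
      also have "{0..<Nn} \<inter> H = H" using H by auto
      also have "card ({0..<Nn} - H) = Nn - card H" using H by (simp add: card_Diff_subset finite_subset)
      finally show ?thesis using True by (simp add: mult.commute)
    next
      case False thus ?thesis unfolding g_def by simp
    qed
  qed
  also have "\<dots> = (real (card H) * s + real (Nn - card H)) ^ card {y\<in>X. y \<in> W} * real Nn ^ card {y\<in>X. y \<notin> W}"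
    using X by (rule prod_if_const)
  also have "{y\<in>X. y \<in> W} = W" using WX by auto
  also have "{y\<in>X. y \<notin> W} = X - W" by auto
  finally show ?thesis unfolding E_def Om_def .
qed


lemma chernoff_apply:
  fixes X W :: "nat set" and H :: "nat set" and Nn L :: nat and s c beta :: real
  assumes X: "finite X" and WX: "W \<subseteq> X" and H: "H \<subseteq> {0..<Nn}" and s0: "0 < s" and s1: "s \<le> 1"
    and Nn: "Nn > 0" and beta: "beta = (real (card H) * s + real (Nn - card H)) / real Nn"
    and L: "L \<le> card W"
  shows "real (card {f \<in> PiE X (\<lambda>_. {0..<Nn}). real (card {y\<in>W. f y \<in> H}) < c * real L})
      \<le> (s powr (-c) * beta) ^ L * real (card (PiE X (\<lambda>_. {0..<Nn})))"
proof -
  define E where "E = {f \<in> PiE X (\<lambda>_. {0..<Nn}). real (card {y\<in>W. f y \<in> H}) < c * real L}"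
  have ch: "real (card E) * s powr (c * real L) \<le> (real (card H) * s + real (Nn - card H)) ^ card W * real Nn ^ card (X - W)"
    unfolding E_def by (rule chernoff_count[OF X WX H s0 s1])
  have cH: "card H \<le> Nn" using H by (metis card_atLeastLessThan card_mono finite_atLeastLessThan minus_nat.diff_0)
  have b0: "0 \<le> beta" unfolding beta using s0 by auto
  have b1: "beta \<le> 1"
  proof -
    have "real (card H) * s \<le> real (card H)" using s1 by (simp add: mult_left_le)
    hence "real (card H) * s + real (Nn - card H) \<le> real Nn" using cH by (simp add: of_nat_diff)
    thus ?thesis unfolding beta using Nn by (simp add: divide_le_eq_1)
  qed
  have e1: "real (card H) * s + real (Nn - card H) = beta * real Nn" unfolding beta using Nn by simp
  have cX: "card X = card W + card (X - W)" using WX X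
    by (metis card_Diff_subset card_mono finite_subset le_add_diff_inverse)
  have cOm: "real (card (PiE X (\<lambda>_. {0..<Nn}))) = real Nn ^ card W * real Nn ^ card (X - W)"
    using X by (simp add: card_PiE cX power_add)
  have "real (card E) * s powr (c * real L) \<le> beta ^ card W * real (card (PiE X (\<lambda>_. {0..<Nn})))"
    using ch unfolding e1 cOm by (simp add: power_mult_distrib mult_ac)
  also have "\<dots> \<le> beta ^ L * real (card (PiE X (\<lambda>_. {0..<Nn})))"
    using b0 b1 L by (intro mult_right_mono power_decreasing) auto
  finally have *: "real (card E) * s powr (c * real L) \<le> beta ^ L * real (card (PiE X (\<lambda>_. {0..<Nn})))" .
  have sp: "s powr (c * real L) > 0" using s0 by simp
  have "real (card E) \<le> beta ^ L * real (card (PiE X (\<lambda>_. {0..<Nn}))) / s powr (c * real L)"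
    using * sp by (simp add: field_simps)
  also have "\<dots> = (s powr (-c)) ^ L * beta ^ L * real (card (PiE X (\<lambda>_. {0..<Nn})))"
  proof -
    have "(s powr (-c)) ^ L = s powr (- (c * real L))"
      using s0 by (simp add: powr_realpow[symmetric] powr_powr)
    thus ?thesis using s0 by (simp add: powr_minus field_simps)
  qed
  finally show ?thesis unfolding E_def by (simp add: power_mult_distrib)
qed

section \<open>Part 1: existence of a marking\<close>

definition "NN = (1000000::nat)"
definition "MM = (285514::nat)"

locale p1 =
  fixes k n m :: nat and F :: cnf and D :: nat and x :: real
  assumes F: "F \<in> kcnf_formulas k n m"
    and dist: "\<And>j. j < length F \<Longrightarrow> k - 1 \<le> card (var_cl (F ! j))"
    and k3: "k \<ge> 3"
    and Dg: "\<And>y. y \<in> V_good k n F \<Longrightarrow> degree F y \<le> D"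
    and x0: "0 \<le> x" and x1: "x < 1"
    and lll: "2 * rho_m ^ (k - 3) + rho_c ^ (k - 3) \<le> x * (1 - x) ^ (k * D)"
begin

definition "Good = V_good k n F"
definition "Om1 = PiE Good (\<lambda>_. {0..<NN})"
definition "W j = var_cl (F ! j) \<inter> Good"
definition "Hm = {0..<MM}"
definition "Ha = {MM..<2*MM}"
definition "Hc = {2*MM..<NN}"
definition "Eh H t j = {f \<in> Om1. real (card {y\<in>W j. f y \<in> H}) < t}"
definition "E j = Eh Hm (r0 * real (k - 3)) j \<union> Eh Ha (r0 * real (k - 3)) j \<union> Eh Hc (2 * r0 * real (k - 3)) j"
definition "I = C_good k n F"
definition "Nb j = {j'. W j' \<inter> W j \<noteq> {}}"

lemma finGood: "finite Good" unfolding Good_def V_good_def by auto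

lemma finOm1[simp]: "finite Om1" unfolding Om1_def using finGood by (intro finite_PiE) auto

lemma card_W: assumes j: "j \<in> I" shows "k - 3 \<le> card (W j)"
proof -
  have jl: "j < length F" and b2: "card (var_cl (F ! j) \<inter> V_bad k n F) \<le> 2"
    using C_good_bad_le2[of j k n F] j unfolding I_def by auto
  have vs: "var_cl (F ! j) \<subseteq> {0..<n}" using kcnf_clause(2)[OF F jl] .
  have "W j = var_cl (F ! j) - (var_cl (F ! j) \<inter> V_bad k n F)"
    unfolding W_def Good_def V_good_def using vs by auto
  hence "card (W j) = card (var_cl (F ! j)) - card (var_cl (F ! j) \<inter> V_bad k n F)"
    by (simp add: card_Diff_subset)
  thus ?thesis using dist[OF jl] b2 by linarith
qed

lemma W_Good: "W j \<subseteq> Good" unfolding W_def by auto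

lemma card_Eh:
  assumes j: "j \<in> I" and H: "H \<subseteq> {0..<NN}" and s0: "0 < s" and s1: "s \<le> 1"
    and beta: "beta = (real (card H) * s + real (NN - card H)) / real NN"
  shows "real (card (Eh H (c * real (k - 3)) j)) \<le> (s powr (-c) * beta) ^ (k - 3) * real (card Om1)"
  unfolding Eh_def Om1_def
  by (rule chernoff_apply[OF finGood W_Good H s0 s1 _ beta card_W[OF j]]) (simp add: NN_def)

lemma rho_m_eq: "(1/3) powr (-r0) * ((real (card Hm) * (1/3) + real (NN - card Hm)) / real NN) = rho_m"
  unfolding rho_m_def Hm_def NN_def MM_def qq_def by (simp add: powr_minus powr_divide)

lemma rho_c_eq: "(41/100) powr (-(2 * r0)) * ((real (card Hc) * (41/100) + real (NN - card Hc)) / real NN) = rho_c"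
  unfolding rho_c_def Hc_def NN_def MM_def qq_def by (simp add: powr_minus powr_divide)

lemma card_E: assumes j: "j \<in> I" shows "real (card (E j)) \<le> x * (1 - x) ^ (k * D) * real (card Om1)"
proof -
  have m: "real (card (Eh Hm (r0 * real (k - 3)) j)) \<le> ((1/3) powr (-r0) * ((real (card Hm) * (1/3) + real (NN - card Hm)) / real NN)) ^ (k - 3) * real (card Om1)"
    by (rule card_Eh[OF j]) (auto simp: Hm_def NN_def MM_def)
  have a: "real (card (Eh Ha (r0 * real (k - 3)) j)) \<le> ((1/3) powr (-r0) * ((real (card Ha) * (1/3) + real (NN - card Ha)) / real NN)) ^ (k - 3) * real (card Om1)"
    by (rule card_Eh[OF j]) (auto simp: Ha_def NN_def MM_def)
  have c: "real (card (Eh Hc (2 * r0 * real (k - 3)) j)) \<le> ((41/100) powr (-(2 * r0)) * ((real (card Hc) * (41/100) + real (NN - card Hc)) / real NN)) ^ (k - 3) * real (card Om1)"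
    by (rule card_Eh[OF j]) (auto simp: Hc_def NN_def MM_def)
  have cHa: "card Ha = card Hm" unfolding Ha_def Hm_def by simp
  note m = m[unfolded rho_m_eq] and a = a[unfolded cHa rho_m_eq] and c = c[unfolded rho_c_eq]
  have "card (E j) \<le> card (Eh Hm (r0 * real (k - 3)) j) + card (Eh Ha (r0 * real (k - 3)) j) + card (Eh Hc (2 * r0 * real (k - 3)) j)"
    unfolding E_def by (meson card_Un_le add_le_mono le_refl order_trans)
  hence "real (card (E j)) \<le> real (card (Eh Hm (r0 * real (k - 3)) j)) + real (card (Eh Ha (r0 * real (k - 3)) j)) + real (card (Eh Hc (2 * r0 * real (k - 3)) j))"
    by (metis of_nat_add of_nat_le_iff)
  also have "\<dots> \<le> (2 * rho_m ^ (k - 3) + rho_c ^ (k - 3)) * real (card Om1)"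
    using m a c by (simp add: algebra_simps)
  also have "\<dots> \<le> x * (1 - x) ^ (k * D) * real (card Om1)"
    using lll by (intro mult_right_mono) auto
  finally show ?thesis .
qed

lemma dep_E: "depends Om1 (E j) (W j)"
  unfolding depends_def E_def Eh_def
proof (intro ballI impI)
  fix f g assume f: "f \<in> Om1" and g: "g \<in> Om1" and fg: "\<forall>y\<in>W j. f y = g y"
  have e: "{y\<in>W j. f y \<in> H} = {y\<in>W j. g y \<in> H}" for H using fg by auto
  show "(f \<in> {f \<in> Om1. real (card {y \<in> W j. f y \<in> Hm}) < r0 * real (k - 3)} \<union>
            {f \<in> Om1. real (card {y \<in> W j. f y \<in> Ha}) < r0 * real (k - 3)} \<union>
            {f \<in> Om1. real (card {y \<in> W j. f y \<in> Hc}) < 2 * r0 * real (k - 3)}) =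
        (g \<in> {f \<in> Om1. real (card {y \<in> W j. f y \<in> Hm}) < r0 * real (k - 3)} \<union>
            {f \<in> Om1. real (card {y \<in> W j. f y \<in> Ha}) < r0 * real (k - 3)} \<union>
            {f \<in> Om1. real (card {y \<in> W j. f y \<in> Hc}) < 2 * r0 * real (k - 3)})"
    using f g by (simp add: e[of Hm] e[of Ha] e[of Hc])
qed

lemma deg_count: assumes y: "y \<in> Good" shows "card {j. j < length F \<and> y \<in> var_cl (F ! j)} \<le> D"
  using card_clauses_with_var[of F y] Dg[of y] y unfolding Good_def by auto

lemma card_Wk: "j < length F \<Longrightarrow> card (W j) \<le> k"
  using kcnf_clause(3)[OF F] unfolding W_def
  by (meson card_mono finite_var_cl inf_le1 le_trans)

lemma card_Nb: assumes j: "j \<in> I" shows "card (Nb j \<inter> I) \<le> k * D"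
proof -
  have jl: "j < length F" using j unfolding I_def C_good_def by auto
  have "Nb j \<inter> I \<subseteq> (\<Union>y\<in>W j. {j'. j' < length F \<and> y \<in> var_cl (F ! j')})"
    unfolding Nb_def I_def C_good_def W_def by auto
  hence "card (Nb j \<inter> I) \<le> card (\<Union>y\<in>W j. {j'. j' < length F \<and> y \<in> var_cl (F ! j')})"
    by (intro card_mono) (rule finite_subset[of _ "{..<length F}"], auto)
  also have "\<dots> \<le> (\<Sum>y\<in>W j. card {j'. j' < length F \<and> y \<in> var_cl (F ! j')})"
    by (intro card_UN_le) (simp add: W_def)
  also have "\<dots> \<le> (\<Sum>y\<in>W j. D)"
    by (intro sum_mono deg_count) (auto simp: W_def)
  also have "\<dots> = card (W j) * D" by simp
  also have "\<dots> \<le> k * D" using card_Wk[OF jl] by simp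
  finally show ?thesis .
qed

lemma finI: "finite I" unfolding I_def C_good_def by auto

lemma is_lll: "lll_setting Om1 E I Nb x (k * D)"
proof
  show "finite Om1" by simp
  show "finite I" by (rule finI)
  show "0 \<le> x" "x < 1" using x0 x1 by auto
  show "real (card (E i)) \<le> x * (1 - x) ^ (k * D) * real (card Om1)" if "i \<in> I" for i
    using card_E[OF that] .
  show "card (Nb i \<inter> I) \<le> k * D" if "i \<in> I" for i using card_Nb[OF that] .
  fix i S assume i: "i \<in> I" and S: "S \<subseteq> I - Nb i - {i}"
  have "card (E i \<inter> avoid Om1 E S) * card Om1 = card (E i) * card (avoid Om1 E S)"
    unfolding Om1_def
  proof (rule indep_card)
    show "finite (PiE Good (\<lambda>_. {0..<NN}))" using finOm1 unfolding Om1_def .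
    show "E i \<subseteq> PiE Good (\<lambda>_. {0..<NN})" unfolding E_def Eh_def Om1_def by auto
    show "avoid (PiE Good (\<lambda>_. {0..<NN})) E S \<subseteq> PiE Good (\<lambda>_. {0..<NN})"
      unfolding avoid_def by auto
    show "depends (PiE Good (\<lambda>_. {0..<NN})) (E i) (W i)"
      using dep_E unfolding Om1_def .
    show "depends (PiE Good (\<lambda>_. {0..<NN})) (avoid (PiE Good (\<lambda>_. {0..<NN})) E S) (\<Union>j\<in>S. W j)"
      by (rule depends_avoid) (use dep_E in \<open>auto simp: Om1_def\<close>)
    show "W i \<inter> (\<Union>j\<in>S. W j) = {}" using S unfolding Nb_def by auto
  qed
  hence "real (card (E i \<inter> avoid Om1 E S) * card Om1) = real (card (E i) * card (avoid Om1 E S))"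
    by (rule arg_cong)
  thus "real (card (E i \<inter> avoid Om1 E S)) * real (card Om1) =
       real (card (E i)) * real (card (avoid Om1 E S))" by simp
qed

lemma exists_marking: "\<exists>Vm Va Vc. marking k n F r0 Vm Va Vc"
proof -
  interpret L: lll_setting Om1 E I Nb x "k * D" by (rule is_lll)
  have "Om1 \<noteq> {}" unfolding Om1_def by (simp add: PiE_eq_empty_iff NN_def)
  hence "avoid Om1 E I \<noteq> {}" by (rule L.avoid_pos)
  then obtain f where f: "f \<in> avoid Om1 E I" by auto
  hence fO: "f \<in> Om1" and fE: "\<And>j. j \<in> I \<Longrightarrow> f \<notin> E j" unfolding avoid_def by auto
  define Vm where "Vm = {y\<in>Good. f y \<in> Hm}"
  define Va where "Va = {y\<in>Good. f y \<in> Ha}"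
  define Vc where "Vc = V_bad k n F \<union> {y\<in>Good. f y \<in> Hc}"
  have fr: "f y \<in> {0..<NN}" if "y \<in> Good" for y using fO that unfolding Om1_def by auto
  have Hcov: "{0..<NN} = Hm \<union> Ha \<union> Hc" unfolding Hm_def Ha_def Hc_def NN_def MM_def by auto
  have Hdisj: "Hm \<inter> Ha = {}" "Hm \<inter> Hc = {}" "Ha \<inter> Hc = {}" unfolding Hm_def Ha_def Hc_def by auto
  have bad_n: "V_bad k n F \<subseteq> {0..<n}" by (rule V_bad_sub[OF F])
  have GB: "Good \<inter> V_bad k n F = {}" "Good \<union> V_bad k n F = {0..<n}"
    unfolding Good_def V_good_def using bad_n by auto
  have VcB: "Vc - V_bad k n F = {y\<in>Good. f y \<in> Hc}" unfolding Vc_def using GB by auto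
  have cnt: "var_cl (F ! j) \<inter> {y\<in>Good. f y \<in> H} = {y\<in>W j. f y \<in> H}" for j H
    unfolding W_def by auto
  have rk: "real (k - 3) = real k - 3" using k3 by simp
  have good_j: "real (card {y\<in>W j. f y \<in> Hm}) \<ge> r0 * (real k - 3) \<and>
       real (card {y\<in>W j. f y \<in> Ha}) \<ge> r0 * (real k - 3) \<and>
       real (card {y\<in>W j. f y \<in> Hc}) \<ge> 2 * r0 * (real k - 3)" if j: "j \<in> I" for j
    using fE[OF j] fO unfolding E_def Eh_def rk by auto
  show ?thesis
  proof (intro exI)
    show "marking k n F r0 Vm Va Vc"
      unfolding marking_def r_distributed_def
    proof (intro conjI)
      show "Vm \<inter> Va = {}" unfolding Vm_def Va_def using Hdisj by auto
      show "Vm \<inter> Vc = {}" unfolding Vm_def Vc_def using Hdisj GB by auto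
      show "Va \<inter> Vc = {}" unfolding Va_def Vc_def using Hdisj GB by auto
      show "Vm \<union> Va \<union> Vc = {0..<n}"
      proof
        show "Vm \<union> Va \<union> Vc \<subseteq> {0..<n}" unfolding Vm_def Va_def Vc_def using GB by auto
        show "{0..<n} \<subseteq> Vm \<union> Va \<union> Vc"
        proof
          fix y assume y: "y \<in> {0..<n}"
          show "y \<in> Vm \<union> Va \<union> Vc"
          proof (cases "y \<in> Good")
            case True
            hence "f y \<in> Hm \<union> Ha \<union> Hc" using fr Hcov by auto
            thus ?thesis using True unfolding Vm_def Va_def Vc_def by auto
          next
            case False thus ?thesis using y GB unfolding Vc_def by auto
          qed
        qed
      qed
      show "V_bad k n F \<subseteq> Vc" unfolding Vc_def by auto
      show "Vc - V_bad k n F \<subseteq> V_good k n F" unfolding VcB Good_def by auto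
      show "Vm \<subseteq> V_good k n F" unfolding Vm_def Good_def by auto
      show "Va \<subseteq> V_good k n F" unfolding Va_def Good_def by auto
      show "\<forall>j\<in>C_good k n F. 2 * r0 * (real k - 3) \<le> real (card (var_cl (F ! j) \<inter> (Vc - V_bad k n F)))"
        using good_j unfolding VcB cnt I_def by auto
      show "\<forall>j\<in>C_good k n F. r0 * (real k - 3) \<le> real (card (var_cl (F ! j) \<inter> Vm))"
        using good_j unfolding Vm_def cnt I_def by auto
      show "\<forall>j\<in>C_good k n F. r0 * (real k - 3) \<le> real (card (var_cl (F ! j) \<inter> Va))"
        using good_j unfolding Va_def cnt I_def by auto
    qed
  qed
qed

end


section \<open>Numerics for large k\<close>

definition "Pk k = 2 powr ((r0 - 2 * delta) * real k)"
definition "Dk k = nat (Delta k) - 1"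
definition "x2 k = 2 * 2 powr (-(2 * r0 * (real k - 3)))"
definition "x1 k = 2 * (2 * rho_m ^ (k - 3) + rho_c ^ (k - 3))"
definition "theta k = 1 / (real k * 2 powr ((r0 + delta) * real k))"

lemma Dk_le: "real (Dk k) \<le> Pk k"
  using Delta_bounds[of k] unfolding Dk_def Pk_def by linarith

lemma Pk_ge1: "Pk k \<ge> 1"
  unfolding Pk_def r0_def delta_def by (intro ge_one_powr_ge_zero) auto

lemma lll_cond:
  fixes p x :: real and N :: nat
  assumes p: "0 \<le> p" and x: "x = 2 * p" and Nx: "real N * x \<le> 1/2"
  shows "p \<le> x * (1 - x) ^ N"
proof (cases "N = 0")
  case True thus ?thesis using x p by simp
next
  case False
  hence "real N \<ge> 1" by simp
  hence "1 * x \<le> real N * x" using x p by (intro mult_right_mono) auto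
  hence x12: "x \<le> 1/2" using Nx by simp
  have "1 + real N * (- x) \<le> (1 + (- x)) ^ N" using x12 by (intro Bernoulli_inequality) auto
  hence "1/2 \<le> (1 - x) ^ N" using Nx by simp
  hence "x * (1/2) \<le> x * (1 - x) ^ N" using x p by (intro mult_left_mono) auto
  thus ?thesis using x by simp
qed

lemma exp_cond:
  fixes x th :: real and D :: nat
  assumes x: "0 \<le> x" and h1: "real D * x \<le> 1/2" and h2: "2 * real D * x \<le> th"
  shows "1 \<le> (1 - x) ^ D * exp th"
proof -
  define y where "y = real D * x"
  have y0: "0 \<le> y" "y \<le> 1/2" using x h1 unfolding y_def by auto
  have b: "1 - y \<le> (1 - x) ^ D"
  proof (cases "D = 0")
    case True thus ?thesis unfolding y_def by simp
  next
    case False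
    have "1 \<le> real D" using False by simp
    hence "1 * x \<le> real D * x" using x by (intro mult_right_mono) auto
    hence "x \<le> 1" using h1 by simp
    hence "1 + real D * (- x) \<le> (1 + (- x)) ^ D" by (intro Bernoulli_inequality) auto
    thus ?thesis unfolding y_def by simp
  qed
  have "exp th \<ge> exp (2 * y)" using h2 unfolding y_def by simp
  moreover have "exp (2 * y) \<ge> 1 + 2 * y" by (rule exp_ge_add_one_self)
  ultimately have e: "exp th \<ge> 1 + 2 * y" by linarith
  have "0 \<le> y * (1 - 2 * y)" using y0 by simp
  hence "1 \<le> (1 - y) * (1 + 2 * y)" by (simp add: algebra_simps)
  also have "\<dots> \<le> (1 - x) ^ D * exp th"
    using b e y0 by (intro mult_mono) auto
  finally show ?thesis .
qed


lemma ev_part2: "eventually (\<lambda>k. 2 * real k * Pk k * x2 k \<le> theta k) sequentially"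
  unfolding Pk_def x2_def theta_def r0_def delta_def by real_asymp

lemma theta_le1: "k \<ge> 1 \<Longrightarrow> theta k \<le> 1"
proof -
  assume k: "k \<ge> 1"
  have "2 powr ((r0 + delta) * real k) \<ge> 1" unfolding r0_def delta_def by (intro ge_one_powr_ge_zero) auto
  moreover have "real k \<ge> 1" using k by simp
  ultimately have "1 * 1 \<le> real k * 2 powr ((r0 + delta) * real k)"
    by (intro mult_mono) auto
  thus ?thesis unfolding theta_def by simp
qed

lemma part2_num: "eventually (\<lambda>k. 0 \<le> x2 k \<and> x2 k < 1 \<and>
    2 powr (-(2 * r0 * (real k - 3))) \<le> x2 k * (1 - x2 k) ^ (k * Dk k) \<and>
    1 \<le> (1 - x2 k) ^ Dk k * exp (theta k)) sequentially"
  using ev_part2 eventually_ge_at_top[of 1]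
proof eventually_elim
  case (elim k)
  have x0: "0 \<le> x2 k" unfolding x2_def by simp
  have P1: "Pk k \<ge> 1" by (rule Pk_ge1)
  have th1: "theta k \<le> 1" using theta_le1 elim(2) .
  have k1: "real k \<ge> 1" using elim(2) by simp
  have kP: "1 * 1 \<le> real k * Pk k" using P1 k1 by (intro mult_mono) auto
  have kPx: "real k * Pk k * x2 k \<le> 1/2" using elim(1) th1 by simp
  have xle: "1 * x2 k \<le> real k * Pk k * x2 k" using kP x0 by (intro mult_right_mono) auto
  have DxkP: "real (Dk k) * x2 k \<le> Pk k * x2 k" using Dk_le x0 by (intro mult_right_mono) auto
  have "1 * (Pk k * x2 k) \<le> real k * (Pk k * x2 k)" using k1 P1 x0 by (intro mult_right_mono) auto
  hence Pkx: "Pk k * x2 k \<le> real k * Pk k * x2 k" by (simp add: mult.assoc)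
  have a: "real (k * Dk k) * x2 k \<le> 1/2"
  proof -
    have "real (k * Dk k) * x2 k = real k * (real (Dk k) * x2 k)" by simp
    also have "\<dots> \<le> real k * (Pk k * x2 k)" using DxkP by (intro mult_left_mono) auto
    finally show ?thesis using kPx by (simp add: mult.assoc)
  qed
  have "2 powr (-(2 * r0 * (real k - 3))) \<le> x2 k * (1 - x2 k) ^ (k * Dk k)"
    by (rule lll_cond[OF _ _ a]) (auto simp: x2_def)
  moreover have "1 \<le> (1 - x2 k) ^ Dk k * exp (theta k)"
    by (rule exp_cond[OF x0]) (use DxkP Pkx kPx elim(1) in auto)
  ultimately show ?case using x0 xle kPx by auto
qed

lemma ev_rho:
  fixes rho eps :: real
  assumes r0': "0 < rho" and r1: "rho * 2 powr (r0 - 2 * delta) < 1" and e: "eps > 0"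
  shows "eventually (\<lambda>k. real k * Pk k * rho ^ (k - 3) \<le> eps) sequentially"
proof -
  define lam where "lam = rho * 2 powr (r0 - 2 * delta)"
  have l0: "0 < lam" "lam < 1" using r0' r1 unfolding lam_def by auto
  have "(\<lambda>k. of_nat k * lam ^ k) \<longlonglongrightarrow> 0" using l0 by (intro powser_times_n_limit_0) auto
  moreover have "eps * rho ^ 3 > 0" using e r0' by simp
  ultimately have ev: "eventually (\<lambda>k. real k * lam ^ k < eps * rho ^ 3) sequentially"
    by (rule order_tendstoD(2))
  show ?thesis using ev eventually_ge_at_top[of 3]
  proof eventually_elim
    case (elim k)
    have Pk: "Pk k = (2 powr (r0 - 2 * delta)) ^ k"
      unfolding Pk_def by (simp add: powr_realpow[symmetric] powr_powr mult.commute)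
    have rk: "rho ^ k = rho ^ (k - 3) * rho ^ 3" using elim(2) by (simp add: power_add[symmetric])
    have "real k * Pk k * rho ^ (k - 3) * rho ^ 3 = real k * lam ^ k"
      unfolding Pk lam_def rk power_mult_distrib by (simp add: mult_ac)
    hence "real k * Pk k * rho ^ (k - 3) * rho ^ 3 < eps * rho ^ 3" using elim(1) by (simp only:)
    thus ?case using r0' by simp
  qed
qed

lemma rho_pos: "rho_m > 0" "rho_c > 0"
  unfolding rho_m_def rho_c_def qq_def by auto

lemma part1_num: "eventually (\<lambda>k. 0 \<le> x1 k \<and> x1 k < 1 \<and>
    2 * rho_m ^ (k - 3) + rho_c ^ (k - 3) \<le> x1 k * (1 - x1 k) ^ (k * Dk k)) sequentially"
proof -
  have e32: "(1/32::real) > 0" by simp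
  show ?thesis
  using ev_rho[OF rho_pos(1) rho_m_bound e32] ev_rho[OF rho_pos(2) rho_c_bound e32]
    eventually_ge_at_top[of 1]
proof eventually_elim
  case (elim k)
  define p where "p = 2 * rho_m ^ (k - 3) + rho_c ^ (k - 3)"
  have p0: "0 \<le> p" unfolding p_def using rho_pos by simp
  have x: "x1 k = 2 * p" unfolding x1_def p_def ..
  have P1: "Pk k \<ge> 1" by (rule Pk_ge1)
  have k1: "real k \<ge> 1" using elim(3) by simp
  have kP: "1 * 1 \<le> real k * Pk k" using P1 k1 by (intro mult_mono) auto
  have kPx: "real k * Pk k * x1 k \<le> 1/2"
  proof -
    have "real k * Pk k * x1 k = 4 * (real k * Pk k * rho_m ^ (k - 3)) + 2 * (real k * Pk k * rho_c ^ (k - 3))"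
      unfolding x1_def by (simp add: algebra_simps)
    thus ?thesis using elim(1,2) by simp
  qed
  have x0: "0 \<le> x1 k" using x p0 by simp
  have xle: "1 * x1 k \<le> real k * Pk k * x1 k" using kP x0 by (intro mult_right_mono) auto
  have a: "real (k * Dk k) * x1 k \<le> 1/2"
  proof -
    have "real (k * Dk k) * x1 k = real k * (real (Dk k) * x1 k)" by simp
    also have "\<dots> \<le> real k * (Pk k * x1 k)" using Dk_le x0 by (intro mult_left_mono mult_right_mono) auto
    finally show ?thesis using kPx by (simp add: mult.assoc)
  qed
  have "p \<le> x1 k * (1 - x1 k) ^ (k * Dk k)" by (rule lll_cond[OF p0 x a])
  thus ?case using x0 xle kPx unfolding p_def by auto
qed
qed


section \<open>Counting random formulas\<close>

lemma count_some:
  fixes A Bd :: "'a set"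
  assumes A: "finite A" and Bd: "Bd \<subseteq> A"
  shows "card {xs. set xs \<subseteq> A \<and> length xs = m \<and> (\<exists>x\<in>set xs. x \<in> Bd)} * card A \<le> m * card Bd * card A ^ m"
proof (induction m)
  case 0 thus ?case by simp
next
  case (Suc m)
  define G where "G m = {xs. set xs \<subseteq> A \<and> length xs = m \<and> (\<exists>x\<in>set xs. x \<in> Bd)}" for m
  define Lm where "Lm = {xs. set xs \<subseteq> A \<and> length xs = m}"
  have finL: "finite Lm" unfolding Lm_def using A by (rule finite_lists_length_eq)
  have finG: "finite (G m)" unfolding G_def by (rule finite_subset[OF _ finL]) (auto simp: Lm_def)
  have finBd: "finite Bd" using A Bd finite_subset by auto
  have sub: "G (Suc m) \<subseteq> (\<lambda>(xs, x). x # xs) ` (Lm \<times> Bd) \<union> (\<lambda>(xs, x). x # xs) ` (G m \<times> A)"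
  proof
    fix ys assume "ys \<in> G (Suc m)"
    then obtain x xs where ys: "ys = x # xs" and x: "x \<in> A" and xs: "set xs \<subseteq> A" "length xs = m"
      and b: "x \<in> Bd \<or> (\<exists>z\<in>set xs. z \<in> Bd)"
      unfolding G_def by (cases ys) auto
    show "ys \<in> (\<lambda>(xs, x). x # xs) ` (Lm \<times> Bd) \<union> (\<lambda>(xs, x). x # xs) ` (G m \<times> A)"
    proof (cases "x \<in> Bd")
      case True
      hence "(xs, x) \<in> Lm \<times> Bd" using xs unfolding Lm_def by auto
      thus ?thesis unfolding ys by force
    next
      case False
      hence "(xs, x) \<in> G m \<times> A" using xs x b unfolding G_def by auto
      thus ?thesis unfolding ys by force
    qed
  qed
  have "card (G (Suc m)) \<le> card ((\<lambda>(xs, x). x # xs) ` (Lm \<times> Bd) \<union> (\<lambda>(xs, x). x # xs) ` (G m \<times> A))"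
    using sub finL finG finBd A by (intro card_mono) auto
  also have "\<dots> \<le> card ((\<lambda>(xs, x). x # xs) ` (Lm \<times> Bd)) + card ((\<lambda>(xs, x). x # xs) ` (G m \<times> A))"
    by (rule card_Un_le)
  also have "\<dots> \<le> card (Lm \<times> Bd) + card (G m \<times> A)"
    by (intro add_mono card_image_le) (use finL finG finBd A in auto)
  also have "\<dots> = card A ^ m * card Bd + card (G m) * card A"
    using A unfolding Lm_def by (simp add: card_cartesian_product card_lists_length_eq)
  finally have c: "card (G (Suc m)) \<le> card A ^ m * card Bd + card (G m) * card A" .
  have IH: "card (G m) * card A \<le> m * card Bd * card A ^ m" using Suc.IH unfolding G_def .
  have "card (G (Suc m)) * card A \<le> (card A ^ m * card Bd + card (G m) * card A) * card A"
    using c by (rule mult_right_mono) simp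
  also have "\<dots> = card A ^ m * card Bd * card A + (card (G m) * card A) * card A" by (simp add: algebra_simps)
  also have "\<dots> \<le> card A ^ m * card Bd * card A + (m * card Bd * card A ^ m) * card A"
    using IH by (intro add_left_mono mult_right_mono) auto
  also have "\<dots> = Suc m * card Bd * card A ^ Suc m" by (simp add: algebra_simps)
  finally show ?case unfolding G_def .
qed

definition "Al n = {0..<(n::nat)} \<times> (UNIV :: bool set)"
definition "Bk n d L = {c. set c \<subseteq> Al n \<and> length c = L \<and> card (var_cl c) + d \<le> L}"

lemma finAl: "finite (Al n)" unfolding Al_def by (intro finite_cartesian_product) auto
lemma cardAl: "card (Al n) = 2 * n" unfolding Al_def by (simp add: card_cartesian_product)

lemma finBk: "finite (Bk n d L)"
  unfolding Bk_def by (rule finite_subset[OF _ finite_lists_length_eq[OF finAl, of n L]]) auto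

lemma Bk0: "card (Bk n 0 L) \<le> card (Al n) ^ L"
proof -
  have "card (Bk n 0 L) \<le> card {c. set c \<subseteq> Al n \<and> length c = L}"
    using finite_lists_length_eq[OF finAl, of n L] unfolding Bk_def by (intro card_mono) auto
  thus ?thesis by (simp add: card_lists_length_eq finAl)
qed

lemma Bk_step: "card (Bk n (Suc d) (Suc L)) \<le> card (Bk n (Suc d) L) * card (Al n) + 2 * L * card (Bk n d L)"
proof -
  let ?f = "\<lambda>(xs, x). x # xs"
  let ?S = "SIGMA xs:Bk n d L. var_cl xs \<times> (UNIV :: bool set)"
  have sub: "Bk n (Suc d) (Suc L) \<subseteq> ?f ` (Bk n (Suc d) L \<times> Al n) \<union> ?f ` ?S"
  proof
    fix ys assume "ys \<in> Bk n (Suc d) (Suc L)"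
    then obtain x xs where ys: "ys = x # xs" and x: "x \<in> Al n" and xs: "set xs \<subseteq> Al n" "length xs = L"
      and c: "card (var_cl (x # xs)) + Suc d \<le> Suc L"
      unfolding Bk_def by (cases ys) auto
    have vc: "var_cl (x # xs) = insert (fst x) (var_cl xs)" unfolding var_cl_def by auto
    show "ys \<in> ?f ` (Bk n (Suc d) L \<times> Al n) \<union> ?f ` ?S"
    proof (cases "fst x \<in> var_cl xs")
      case True
      hence "card (var_cl (x # xs)) = card (var_cl xs)" unfolding vc by (simp add: insert_absorb)
      hence "xs \<in> Bk n d L" using c xs unfolding Bk_def by auto
      hence "(xs, x) \<in> ?S" using True by (cases x) auto
      thus ?thesis unfolding ys by force
    next
      case False
      hence "card (var_cl (x # xs)) = Suc (card (var_cl xs))" unfolding vc by simp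
      hence "xs \<in> Bk n (Suc d) L" using c xs unfolding Bk_def by auto
      hence "(xs, x) \<in> Bk n (Suc d) L \<times> Al n" using x by auto
      thus ?thesis unfolding ys by force
    qed
  qed
  have finS: "finite ?S" using finBk by (intro finite_SigmaI) auto
  have "card (Bk n (Suc d) (Suc L)) \<le> card (?f ` (Bk n (Suc d) L \<times> Al n) \<union> ?f ` ?S)"
    using sub by (intro card_mono finite_UnI finite_imageI finite_cartesian_product finBk finAl finS)
  also have "\<dots> \<le> card (?f ` (Bk n (Suc d) L \<times> Al n)) + card (?f ` ?S)" by (rule card_Un_le)
  also have "\<dots> \<le> card (Bk n (Suc d) L \<times> Al n) + card ?S"
    by (intro add_mono card_image_le finite_cartesian_product finBk finAl finS)
  also have "card (Bk n (Suc d) L \<times> Al n) = card (Bk n (Suc d) L) * card (Al n)" by (rule card_cartesian_product)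
  also have "card ?S = (\<Sum>xs\<in>Bk n d L. card (var_cl xs \<times> (UNIV :: bool set)))"
    using finBk by (intro card_SigmaI) auto
  also have "\<dots> \<le> (\<Sum>xs\<in>Bk n d L. 2 * L)"
  proof (intro sum_mono)
    fix xs assume "xs \<in> Bk n d L"
    hence "length xs = L" unfolding Bk_def by auto
    hence "card (var_cl xs) \<le> L" using card_var_cl_le[of xs] by simp
    thus "card (var_cl xs \<times> (UNIV :: bool set)) \<le> 2 * L" by (simp add: card_cartesian_product)
  qed
  also have "\<dots> = 2 * L * card (Bk n d L)" by simp
  finally show ?thesis by simp
qed

lemma Bk1: "card (Bk n 1 L) * card (Al n) \<le> 2 * L^2 * card (Al n) ^ L"
proof (induction L)
  case 0
  have "Bk n 1 0 = {}" unfolding Bk_def by auto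
  thus ?case by simp
next
  case (Suc L)
  let ?M = "card (Al n)"
  have "card (Bk n 1 (Suc L)) \<le> card (Bk n 1 L) * ?M + 2 * L * card (Bk n 0 L)"
    using Bk_step[of n 0 L] by simp
  also have "\<dots> \<le> card (Bk n 1 L) * ?M + 2 * L * ?M ^ L"
    using Bk0[of n L] by (intro add_left_mono mult_left_mono) auto
  finally have c: "card (Bk n 1 (Suc L)) \<le> card (Bk n 1 L) * ?M + 2 * L * ?M ^ L" .
  have "card (Bk n 1 (Suc L)) * ?M \<le> (card (Bk n 1 L) * ?M + 2 * L * ?M ^ L) * ?M"
    using c by (rule mult_right_mono) simp
  also have "\<dots> = (card (Bk n 1 L) * ?M) * ?M + 2 * L * ?M ^ Suc L" by (simp add: algebra_simps)
  also have "\<dots> \<le> (2 * L^2 * ?M ^ L) * ?M + 2 * L * ?M ^ Suc L"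
    using Suc.IH by (intro add_right_mono mult_right_mono) auto
  also have "\<dots> = (2 * L^2 + 2 * L) * ?M ^ Suc L" by (simp add: algebra_simps)
  also have "\<dots> \<le> 2 * (Suc L)^2 * ?M ^ Suc L"
    by (intro mult_right_mono) (auto simp: power2_eq_square)
  finally show ?case .
qed

lemma Bk2: "card (Bk n 2 L) * card (Al n) ^ 2 \<le> 4 * L^4 * card (Al n) ^ L"
proof (induction L)
  case 0
  have "Bk n 2 0 = {}" unfolding Bk_def by auto
  thus ?case by simp
next
  case (Suc L)
  let ?M = "card (Al n)"
  have c: "card (Bk n 2 (Suc L)) \<le> card (Bk n 2 L) * ?M + 2 * L * card (Bk n 1 L)"
    using Bk_step[of n 1 L] by (simp add: numeral_2_eq_2)
  have "card (Bk n 2 (Suc L)) * ?M ^ 2 \<le> (card (Bk n 2 L) * ?M + 2 * L * card (Bk n 1 L)) * ?M ^ 2"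
    using c by (rule mult_right_mono) simp
  also have "\<dots> = (card (Bk n 2 L) * ?M ^ 2) * ?M + 2 * L * ?M * (card (Bk n 1 L) * ?M)"
    by (simp add: algebra_simps power2_eq_square)
  also have "\<dots> \<le> (4 * L^4 * ?M ^ L) * ?M + 2 * L * ?M * (2 * L^2 * ?M ^ L)"
    using Suc.IH Bk1[of n L] by (intro add_mono mult_right_mono mult_left_mono) auto
  also have "\<dots> = (4 * L^4 + 4 * L^3) * ?M ^ Suc L" by (simp add: algebra_simps power_numeral_reduce eval_nat_numeral)
  also have "\<dots> \<le> 4 * (Suc L)^4 * ?M ^ Suc L"
  proof (intro mult_right_mono)
    have "L^4 + L^3 \<le> (Suc L)^4" by (simp add: eval_nat_numeral algebra_simps)
    thus "4 * L^4 + 4 * L^3 \<le> 4 * (Suc L)^4" by simp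
  qed simp
  finally show ?case .
qed


definition "Cl k n = {c. set c \<subseteq> Al n \<and> length c = k}"

lemma kcnf_eq: "kcnf_formulas k n m = {F. set F \<subseteq> Cl k n \<and> length F = m}"
proof -
  have e: "set c \<subseteq> {0..<n} \<times> (UNIV :: bool set) \<longleftrightarrow> (\<forall>l\<in>set c. fst l < n)" for c :: clause
    by (force simp: mem_Times_iff)
  show ?thesis unfolding kcnf_formulas_def Cl_def Al_def e by blast
qed

lemma finCl: "finite (Cl k n)" unfolding Cl_def by (rule finite_lists_length_eq[OF finAl])

lemma cardCl: "card (Cl k n) = (2 * n) ^ k"
  unfolding Cl_def by (simp add: card_lists_length_eq finAl cardAl)

lemma fin_kcnf: "finite (kcnf_formulas k n m)"
  unfolding kcnf_eq by (rule finite_lists_length_eq[OF finCl])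

lemma card_kcnf: "card (kcnf_formulas k n m) = ((2 * n) ^ k) ^ m"
  unfolding kcnf_eq by (simp add: card_lists_length_eq finCl cardCl)

lemma bad_clauses:
  "card {c \<in> Cl k n. card (var_cl c) < k - 1} * (2 * n) ^ 2 \<le> 4 * k ^ 4 * (2 * n) ^ k"
proof -
  have "{c \<in> Cl k n. card (var_cl c) < k - 1} \<subseteq> Bk n 2 k" unfolding Cl_def Bk_def by auto
  hence "card {c \<in> Cl k n. card (var_cl c) < k - 1} \<le> card (Bk n 2 k)" by (intro card_mono finBk)
  hence "card {c \<in> Cl k n. card (var_cl c) < k - 1} * (2 * n) ^ 2 \<le> card (Bk n 2 k) * (2 * n) ^ 2"
    by (rule mult_right_mono) simp
  also have "\<dots> \<le> 4 * k ^ 4 * (2 * n) ^ k" using Bk2[of n k] by (simp add: cardAl)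
  finally show ?thesis .
qed

lemma whp:
  assumes n: "n \<ge> 1"
  shows "1 - real m * real k ^ 4 / real n ^ 2
     \<le> prob_kcnf k n m (\<lambda>F. \<forall>j<length F. k - 1 \<le> card (var_cl (F ! j)))"
proof -
  define C where "C = Cl k n"
  define Bc where "Bc = {c \<in> C. card (var_cl c) < k - 1}"
  define BadF where "BadF = {F. set F \<subseteq> C \<and> length F = m \<and> (\<exists>c\<in>set F. c \<in> Bc)}"
  have finC: "finite C" unfolding C_def by (rule finCl)
  have BcC: "Bc \<subseteq> C" unfolding Bc_def by auto
  have cs: "card BadF * card C \<le> m * card Bc * card C ^ m"
    unfolding BadF_def by (rule count_some[OF finC BcC])
  have bc: "card Bc * (2 * n) ^ 2 \<le> 4 * k ^ 4 * (2 * n) ^ k" unfolding Bc_def C_def by (rule bad_clauses)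
  have cC: "card C = (2 * n) ^ k" unfolding C_def by (rule cardCl)
  have Cpos: "real (card C) > 0" unfolding cC using n by simp
  have eqG: "{F \<in> kcnf_formulas k n m. \<forall>j<length F. k - 1 \<le> card (var_cl (F ! j))} = kcnf_formulas k n m - BadF"
  proof -
    have "(\<forall>j<length F. k - 1 \<le> card (var_cl (F ! j))) \<longleftrightarrow> (\<forall>c\<in>set F. k - 1 \<le> card (var_cl c))" for F
      by (simp add: all_set_conv_all_nth)
    thus ?thesis unfolding kcnf_eq BadF_def Bc_def C_def by auto
  qed
  have BadSub: "BadF \<subseteq> kcnf_formulas k n m" unfolding kcnf_eq BadF_def C_def by auto
  have cK: "card (kcnf_formulas k n m) = card C ^ m" unfolding card_kcnf cC ..
  have le: "card BadF \<le> card C ^ m" using card_mono[OF fin_kcnf BadSub] cK by simp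
  have "card (kcnf_formulas k n m - BadF) = card C ^ m - card BadF"
    using card_Diff_subset[OF finite_subset[OF BadSub fin_kcnf] BadSub] cK by simp
  hence cG: "real (card (kcnf_formulas k n m - BadF)) = real (card C) ^ m - real (card BadF)"
    using of_nat_diff[OF le] by simp
  have KP: "real (card C) ^ m > 0" using Cpos by simp
  have r1: "real (card BadF) / real (card C) ^ m \<le> real m * real (card Bc) / real (card C)"
  proof -
    have "real (card BadF * card C) \<le> real (m * card Bc * card C ^ m)"
      using cs by (simp only: of_nat_le_iff)
    hence "real (card BadF) * real (card C) \<le> real m * real (card Bc) * real (card C) ^ m"
      by simp
    thus ?thesis using Cpos KP by (simp add: field_simps)
  qed
  have r2: "real (card Bc) / real (card C) \<le> real k ^ 4 / real n ^ 2"
  proof -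
    have "real (card Bc * (2 * n) ^ 2) \<le> real (4 * k ^ 4 * (2 * n) ^ k)"
      using bc by (simp only: of_nat_le_iff)
    hence "real (card Bc) * (2 * real n) ^ 2 \<le> 4 * real k ^ 4 * real (card C)"
      unfolding cC by simp
    hence "real (card Bc) * real n ^ 2 \<le> real k ^ 4 * real (card C)" by (simp add: power_mult_distrib)
    thus ?thesis using Cpos n by (simp add: field_simps)
  qed
  have "real m * real (card Bc) / real (card C) \<le> real m * (real k ^ 4 / real n ^ 2)"
    using r2 by (simp add: mult_left_mono times_divide_eq_right[symmetric] del: times_divide_eq_right)
  with r1 have r: "real (card BadF) / real (card C) ^ m \<le> real m * real k ^ 4 / real n ^ 2" by simp
  have "prob_kcnf k n m (\<lambda>F. \<forall>j<length F. k - 1 \<le> card (var_cl (F ! j)))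
        = (real (card C) ^ m - real (card BadF)) / real (card C) ^ m"
    unfolding prob_kcnf_def eqG cG cK by simp
  also have "\<dots> = 1 - real (card BadF) / real (card C) ^ m" using KP by (simp add: field_simps)
  finally show ?thesis using r by simp
qed

lemma prob_mono:
  assumes "\<And>F. F \<in> kcnf_formulas k n m \<Longrightarrow> G F \<Longrightarrow> P F"
  shows "prob_kcnf k n m G \<le> prob_kcnf k n m P"
proof -
  have "card {F \<in> kcnf_formulas k n m. G F} \<le> card {F \<in> kcnf_formulas k n m. P F}"
    using assms fin_kcnf by (intro card_mono) auto
  thus ?thesis unfolding prob_kcnf_def by (intro divide_right_mono) auto
qed

lemma prob_le1: "prob_kcnf k n m P \<le> 1"
proof -
  have "card {F \<in> kcnf_formulas k n m. P F} \<le> card (kcnf_formulas k n m)"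
    using fin_kcnf by (intro card_mono) auto
  thus ?thesis unfolding prob_kcnf_def
    by (cases "card (kcnf_formulas k n m) = 0") (auto simp: divide_le_eq_1)
qed


lemma det_main:
  assumes k3: "k \<ge> 3"
    and n1: "0 \<le> x1 k \<and> x1 k < 1 \<and> 2 * rho_m ^ (k - 3) + rho_c ^ (k - 3) \<le> x1 k * (1 - x1 k) ^ (k * Dk k)"
    and n2: "0 \<le> x2 k \<and> x2 k < 1 \<and> 2 powr (-(2 * r0 * (real k - 3))) \<le> x2 k * (1 - x2 k) ^ (k * Dk k) \<and>
             1 \<le> (1 - x2 k) ^ Dk k * exp (theta k)"
    and F: "F \<in> kcnf_formulas k n m"
    and dist: "\<forall>j<length F. k - 1 \<le> card (var_cl (F ! j))"
  shows "(\<exists>Vm Va Vc. marking k n F r0 Vm Va Vc) \<and>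
            (\<forall>Vm Va Vc. marking k n F r0 Vm Va Vc \<longrightarrow>
               (\<forall>v \<in> Vm \<union> Va. \<forall>V \<subseteq> Vm \<union> Va. v \<notin> V \<longrightarrow> (\<forall>Lam :: nat \<Rightarrow> bool.
                  max (prob_val n F V Lam v False) (prob_val n F V Lam v True)
                    \<le> 1/2 * exp (1 / (real k * 2 powr ((r0 + delta) * real k))))))"
proof (intro conjI allI impI ballI)
  have Dg: "degree F y \<le> Dk k" if "y \<in> V_good k n F" for y
    using good_degree_le[OF that] unfolding Dk_def .
  interpret P1: p1 k n m F "Dk k" "x1 k"
    using F dist k3 Dg n1 by unfold_locales auto
  show "\<exists>Vm Va Vc. marking k n F r0 Vm Va Vc" by (rule P1.exists_marking)
next
  fix Vm Va Vc v V Lam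
  assume mk: "marking k n F r0 Vm Va Vc" and v: "v \<in> Vm \<union> Va" and V: "V \<subseteq> Vm \<union> Va" and vV: "v \<notin> V"
  have Dg: "degree F y \<le> Dk k" if "y \<in> V_good k n F" for y
    using good_degree_le[OF that] unfolding Dk_def .
  have bnd: "prob_val n F V Lam v b \<le> 1/2 * exp (theta k)" for b
  proof -
    interpret P2: p2 k n m F Vm Va Vc V Lam v b "Dk k" "x2 k"
      using F mk v V vV Dg n2 by unfold_locales auto
    have pb: "prob_val n F V Lam v b * (1 - x2 k) ^ Dk k \<le> 1/2" by (rule P2.prob_bound)
    have p0: "0 \<le> prob_val n F V Lam v b" unfolding prob_val_def by simp
    have "prob_val n F V Lam v b = prob_val n F V Lam v b * 1" by simp
    also have "\<dots> \<le> prob_val n F V Lam v b * ((1 - x2 k) ^ Dk k * exp (theta k))"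
      using n2 p0 by (intro mult_left_mono) auto
    also have "\<dots> = (prob_val n F V Lam v b * (1 - x2 k) ^ Dk k) * exp (theta k)" by (simp add: mult_ac)
    also have "\<dots> \<le> 1/2 * exp (theta k)" using pb by (intro mult_right_mono) auto
    finally show ?thesis .
  qed
  show "max (prob_val n F V Lam v False) (prob_val n F V Lam v True)
        \<le> 1/2 * exp (1 / (real k * 2 powr ((r0 + delta) * real k)))"
    using bnd[of False] bnd[of True] unfolding theta_def by simp
qed

theorem proposition2p5:
  shows "\<exists>k0::nat. \<forall>k\<ge>k0. \<forall>\<alpha>::real. 0 < \<alpha> \<and> \<alpha> \<le> alpha0 k \<longrightarrow>
    ((\<lambda>n. prob_kcnf k n (nat \<lfloor>\<alpha> * real n\<rfloor>)
       (\<lambda>F. (\<exists>Vm Va Vc. marking k n F r0 Vm Va Vc) \<and>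
            (\<forall>Vm Va Vc. marking k n F r0 Vm Va Vc \<longrightarrow>
               (\<forall>v \<in> Vm \<union> Va. \<forall>V \<subseteq> Vm \<union> Va. v \<notin> V \<longrightarrow> (\<forall>Lam :: nat \<Rightarrow> bool.
                  max (prob_val n F V Lam v False) (prob_val n F V Lam v True)
                    \<le> 1/2 * exp (1 / (real k * 2 powr ((r0 + delta) * real k))))))))
     \<longlonglongrightarrow> 1)"
proof -
  obtain K1 where K1: "\<And>k. k \<ge> K1 \<Longrightarrow> 0 \<le> x1 k \<and> x1 k < 1 \<and> 2 * rho_m ^ (k - 3) + rho_c ^ (k - 3) \<le> x1 k * (1 - x1 k) ^ (k * Dk k)"
    using part1_num unfolding eventually_sequentially by blast
  obtain K2 where K2: "\<And>k. k \<ge> K2 \<Longrightarrow> 0 \<le> x2 k \<and> x2 k < 1 \<and> 2 powr (-(2 * r0 * (real k - 3))) \<le> x2 k * (1 - x2 k) ^ (k * Dk k) \<and>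
             1 \<le> (1 - x2 k) ^ Dk k * exp (theta k)"
    using part2_num unfolding eventually_sequentially by blast
  show ?thesis
  proof (intro exI[of _ "max (max K1 K2) 3"] allI impI)
    fix k :: nat and \<alpha> :: real
    assume k: "max (max K1 K2) 3 \<le> k" and a: "0 < \<alpha> \<and> \<alpha> \<le> alpha0 k"
    define T where "T n F = ((\<exists>Vm Va Vc. marking k n F r0 Vm Va Vc) \<and>
            (\<forall>Vm Va Vc. marking k n F r0 Vm Va Vc \<longrightarrow>
               (\<forall>v \<in> Vm \<union> Va. \<forall>V \<subseteq> Vm \<union> Va. v \<notin> V \<longrightarrow> (\<forall>Lam :: nat \<Rightarrow> bool.
                  max (prob_val n F V Lam v False) (prob_val n F V Lam v True)
                    \<le> 1/2 * exp (1 / (real k * 2 powr ((r0 + delta) * real k)))))))" for n F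
    have det: "T n F" if "F \<in> kcnf_formulas k n m" "\<forall>j<length F. k - 1 \<le> card (var_cl (F ! j))" for n m F
      unfolding T_def by (rule det_main[OF _ K1 K2 that]) (use k in auto)
    have low: "1 - \<alpha> * real k ^ 4 / real n \<le> prob_kcnf k n (nat \<lfloor>\<alpha> * real n\<rfloor>) (T n)" if n: "n \<ge> 1" for n
    proof -
      define m where "m = nat \<lfloor>\<alpha> * real n\<rfloor>"
      have mle: "real m \<le> \<alpha> * real n" unfolding m_def using a by (simp add: of_nat_nat)
      have "real m * real k ^ 4 / real n ^ 2 \<le> \<alpha> * real n * real k ^ 4 / real n ^ 2"
        using mle by (intro divide_right_mono mult_right_mono) auto
      also have "\<dots> = \<alpha> * real k ^ 4 / real n" using n by (simp add: power2_eq_square)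
      finally have r: "real m * real k ^ 4 / real n ^ 2 \<le> \<alpha> * real k ^ 4 / real n" .
      have "1 - real m * real k ^ 4 / real n ^ 2 \<le> prob_kcnf k n m (\<lambda>F. \<forall>j<length F. k - 1 \<le> card (var_cl (F ! j)))"
        by (rule whp[OF n])
      also have "\<dots> \<le> prob_kcnf k n m (T n)" by (rule prob_mono) (rule det)
      finally show ?thesis using r unfolding m_def by simp
    qed
    have lim: "(\<lambda>n. 1 - \<alpha> * real k ^ 4 / real n) \<longlonglongrightarrow> 1"
    proof -
      have "(\<lambda>n. \<alpha> * real k ^ 4 / real n) \<longlonglongrightarrow> 0" by (rule lim_const_over_n)
      hence "(\<lambda>n. 1 - \<alpha> * real k ^ 4 / real n) \<longlonglongrightarrow> 1 - 0" by (intro tendsto_diff tendsto_const)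
      thus ?thesis by simp
    qed
    have "(\<lambda>n. prob_kcnf k n (nat \<lfloor>\<alpha> * real n\<rfloor>) (T n)) \<longlonglongrightarrow> 1"
    proof (rule tendsto_sandwich[OF _ _ lim tendsto_const])
      show "eventually (\<lambda>n. 1 - \<alpha> * real k ^ 4 / real n \<le> prob_kcnf k n (nat \<lfloor>\<alpha> * real n\<rfloor>) (T n)) sequentially"
        using eventually_ge_at_top[of 1] by eventually_elim (rule low)
      show "eventually (\<lambda>n. prob_kcnf k n (nat \<lfloor>\<alpha> * real n\<rfloor>) (T n) \<le> 1) sequentially"
        by (intro always_eventually allI prob_le1)
    qed
    thus "(\<lambda>n. prob_kcnf k n (nat \<lfloor>\<alpha> * real n\<rfloor>)
       (\<lambda>F. (\<exists>Vm Va Vc. marking k n F r0 Vm Va Vc) \<and>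
            (\<forall>Vm Va Vc. marking k n F r0 Vm Va Vc \<longrightarrow>
               (\<forall>v \<in> Vm \<union> Va. \<forall>V \<subseteq> Vm \<union> Va. v \<notin> V \<longrightarrow> (\<forall>Lam :: nat \<Rightarrow> bool.
                  max (prob_val n F V Lam v False) (prob_val n F V Lam v True)
                    \<le> 1/2 * exp (1 / (real k * 2 powr ((r0 + delta) * real k))))))))
     \<longlonglongrightarrow> 1" unfolding T_def by simp
  qed
qed

end
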